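(* On the good run event (defined in the context, with absolute constant $c_0>1$), for any $c_B>0$ and for $C>1$ a sufficiently large absolute constant, if assumptions (A1)–(A3) hold, then the max-margin solution $W_{\mathrm{MM}}$ satisfies, for $\mu\sim\mathrm{Unif}(\tilde R\cdot\mathbb S^{d-1})$ independent of the pre-training data, \[\frac{(c_B\wedge1)\tilde R^2}{16c_0^2R^2\log^2(2B^2/\delta)}\le\mathbb E_\mu[\mu^\top W_{\mathrm{MM}}\mu]\le\frac{6\tilde R^2}{R^2}.\]
   Context: Pre-training data: $\Lambda\succ0$ symmetric positive-definite $d\times d$, $B,N\ge1$, $R>0$, $\delta\in(0,1)$. For $\tau\in[B]$, $i\in[N+1]$: $\mu_\tau\sim\mathrm{Unif}(R\cdot\mathbb S^{d-1})$, $z_{\tau,i}\sim\mathcal N(0,\Lambda)$, $y_{\tau,i}\sim\mathrm{Unif}(\{\pm1\})$, all independent, $x_{\tau,i}=y_{\tau,i}\mu_\tau+z_{\tau,i}$; $\hat\mu_\tau=\frac1N\sum_{i=1}^Ny_{\tau,i}x_{\tau,i}$, $x_\tau=x_{\tau,N+1}$, $y_\tau=y_{\tau,N+1}$. Max-margin solution: $W_{\mathrm{MM}}=\arg\min\{\|U\|_F^2:\hat\mu_\tau^\top Uy_\tau x_\tau\ge1\ \forall\tau\in[B]\}$. Good run event (with constant $c_0$): for all $\tau\in[B]$, $q\ne\tau$: $|\|\hat\mu_\tau\|^2-R^2|\le \frac{c_0R\sqrt{\mathrm{tr}\Lambda}\log(2B/\delta)}{\sqrt{Nd}}+4\frac{\mathrm{tr}\Lambda\vee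 c_0\|\Lambda\|_2\log(2B/\delta)}{N}$; $|\|x_\tau\|^2-R^2|\le\frac{2c_0R\sqrt{\mathrm{tr}\Lambda}\log(2B/\delta)}{\sqrt d}+4(\mathrm{tr}\Lambda\vee c_0\|\Lambda\|_2\log(2B/\delta))$; $|\langle\hat\mu_q,\hat\mu_\tau\rangle|\le c_0(\frac{R^2}{\sqrt d}+\frac{R\sqrt{\mathrm{tr}\Lambda}}{\sqrt{Nd}}+\frac{\sqrt{\mathrm{tr}(\Lambda^2)}}N)\log(2B^2/\delta)$; $|\langle x_\tau,x_q\rangle|\le c_0(\frac{R^2}{\sqrt d}+\frac{R\sqrt{\mathrm{tr}\Lambda}}{\sqrt d}+\sqrt{\mathrm{tr}(\Lambda^2)})\log(2B^2/\delta)$; $|\langle\hat\mu_\tau,y_\tau x_\tau\rangle-R^2|\le c_0([1+N^{-1/2}]\frac{R\sqrt{\mathrm{tr}\Lambda}}{\sqrt d}+\frac{\sqrt{\mathrm{tr}(\Lambda^2)}}{\sqrt N})\log(2B/\delta)$. Assumptions: (A1) $R^2\ge C^2\sqrt{d\,\mathrm{tr}(\Lambda^2)}\vee C^2(\frac{\mathrm{tr}\Lambda}{d}\vee\sqrt{\frac{\mathrm{tr}(\Lambda^2)}{N}}\vee\|\Lambda\|_2)\log(2B/\delta)$; (A2) $B\ge c_Bd$; (A3) $d\ge C\log^4(2B^2/\delta)$. $\tilde R>0$ is arbitrary. $\vee=\max$, $\wedge=\min$. *)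

theory Defs
  imports "HOL-Analysis.Analysis"
begin

text \<open>Vectors in R^d are represented as functions nat => real (only coordinates i < d matter),
  d x d matrices as nat => nat => real (only entries i,j < d matter). This allows the
  dimension d to be quantified inside the statement (constants must be uniform in d).\<close>

definition dotd :: "nat \<Rightarrow> (nat \<Rightarrow> real) \<Rightarrow> (nat \<Rightarrow> real) \<Rightarrow> real" where
  "dotd d u v = (\<Sum>i<d. u i * v i)"

definition sqnd :: "nat \<Rightarrow> (nat \<Rightarrow> real) \<Rightarrow> real" where
  "sqnd d v = dotd d v v"

definition mvd :: "nat \<Rightarrow> (nat \<Rightarrow> nat \<Rightarrow> real) \<Rightarrow> (nat \<Rightarrow> real) \<Rightarrow> (nat \<Rightarrow> real)" where
  "mvd d A v = (\<lambda>i. \<Sum>j<d. A i j * v j)"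

definition mmd :: "nat \<Rightarrow> (nat \<Rightarrow> nat \<Rightarrow> real) \<Rightarrow> (nat \<Rightarrow> nat \<Rightarrow> real) \<Rightarrow> (nat \<Rightarrow> nat \<Rightarrow> real)" where
  "mmd d A B = (\<lambda>i k. \<Sum>j<d. A i j * B j k)"

definition trd :: "nat \<Rightarrow> (nat \<Rightarrow> nat \<Rightarrow> real) \<Rightarrow> real" where
  "trd d A = (\<Sum>i<d. A i i)"

definition opnorm2 :: "nat \<Rightarrow> (nat \<Rightarrow> nat \<Rightarrow> real) \<Rightarrow> real" where
  "opnorm2 d A = Sup {sqrt (sqnd d (mvd d A v)) | v. sqnd d v = 1}"

definition sym_pd :: "nat \<Rightarrow> (nat \<Rightarrow> nat \<Rightarrow> real) \<Rightarrow> bool" where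
  "sym_pd d L \<longleftrightarrow> (\<forall>i<d. \<forall>j<d. L i j = L j i) \<and>
     (\<forall>v. (\<exists>i<d. v i \<noteq> 0) \<longrightarrow> dotd d v (mvd d L v) > 0)"

definition fro2 :: "nat \<Rightarrow> (nat \<Rightarrow> nat \<Rightarrow> real) \<Rightarrow> real" where
  "fro2 d U = (\<Sum>i<d. \<Sum>j<d. (U i j)\<^sup>2)"

definition dmat :: "nat \<Rightarrow> (nat \<Rightarrow> nat \<Rightarrow> real) set" where
  "dmat d = {U. \<forall>i j. (d \<le> i \<or> d \<le> j) \<longrightarrow> U i j = 0}"

definition mm_feasible :: "nat \<Rightarrow> nat \<Rightarrow> (nat \<Rightarrow> nat \<Rightarrow> real) \<Rightarrow> (nat \<Rightarrow> nat \<Rightarrow> real)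
    \<Rightarrow> (nat \<Rightarrow> real) \<Rightarrow> (nat \<Rightarrow> nat \<Rightarrow> real) \<Rightarrow> bool" where
  "mm_feasible d B muhat xq yq U \<longleftrightarrow>
     (\<forall>\<tau><B. dotd d (muhat \<tau>) (mvd d U (\<lambda>k. yq \<tau> * xq \<tau> k)) \<ge> 1)"

definition is_max_margin :: "nat \<Rightarrow> nat \<Rightarrow> (nat \<Rightarrow> nat \<Rightarrow> real) \<Rightarrow> (nat \<Rightarrow> nat \<Rightarrow> real)
    \<Rightarrow> (nat \<Rightarrow> real) \<Rightarrow> (nat \<Rightarrow> nat \<Rightarrow> real) \<Rightarrow> bool" where
  "is_max_margin d B muhat xq yq W \<longleftrightarrow> W \<in> dmat d \<and> mm_feasible d B muhat xq yq W \<and>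
     (\<forall>U\<in>dmat d. mm_feasible d B muhat xq yq U \<longrightarrow> fro2 d W \<le> fro2 d U)"

text \<open>Uniform distribution on the sphere of radius Rt in R^d: push-forward of the uniform
  distribution on the open unit ball under x \<mapsto> Rt x / |x| (cone measure = normalized surface measure).\<close>
definition unit_ball_d :: "nat \<Rightarrow> (nat \<Rightarrow> real) set" where
  "unit_ball_d d = {x \<in> space (PiM {..<d} (\<lambda>_. lborel)). sqnd d x < 1}"

definition unif_sphere :: "nat \<Rightarrow> real \<Rightarrow> (nat \<Rightarrow> real) measure" where
  "unif_sphere d Rt = distr (uniform_measure (PiM {..<d} (\<lambda>_. lborel)) (unit_ball_d d))
      (PiM {..<d} (\<lambda>_. lborel)) (\<lambda>x. restrict (\<lambda>i. Rt * x i / sqrt (sqnd d x)) {..<d})"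

definition good_run :: "real \<Rightarrow> nat \<Rightarrow> nat \<Rightarrow> nat \<Rightarrow> real \<Rightarrow> real \<Rightarrow> (nat \<Rightarrow> nat \<Rightarrow> real)
    \<Rightarrow> (nat \<Rightarrow> nat \<Rightarrow> real) \<Rightarrow> (nat \<Rightarrow> nat \<Rightarrow> real) \<Rightarrow> (nat \<Rightarrow> real) \<Rightarrow> bool" where
  "good_run c0 d B N R \<delta> L muhat xq yq \<longleftrightarrow>
    (let trL = trd d L; trL2 = trd d (mmd d L L); nL = opnorm2 d L;
         l1 = ln (2 * real B / \<delta>); l2 = ln (2 * (real B)\<^sup>2 / \<delta>) in
     (\<forall>\<tau><B.
        \<bar>sqnd d (muhat \<tau>) - R\<^sup>2\<bar> \<le> c0 * R * sqrt trL * l1 / sqrt (real N * real d)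
            + 4 * max trL (c0 * nL * l1) / real N
      \<and> \<bar>sqnd d (xq \<tau>) - R\<^sup>2\<bar> \<le> 2 * c0 * R * sqrt trL * l1 / sqrt (real d)
            + 4 * max trL (c0 * nL * l1)
      \<and> \<bar>dotd d (muhat \<tau>) (\<lambda>k. yq \<tau> * xq \<tau> k) - R\<^sup>2\<bar> \<le>
            c0 * ((1 + 1 / sqrt (real N)) * R * sqrt trL / sqrt (real d) + sqrt trL2 / sqrt (real N)) * l1
      \<and> (\<forall>q<B. q \<noteq> \<tau> \<longrightarrow>
          \<bar>dotd d (muhat q) (muhat \<tau>)\<bar> \<le>
            c0 * (R\<^sup>2 / sqrt (real d) + R * sqrt trL / sqrt (real N * real d) + sqrt trL2 / real N) * l2
        \<and> \<bar>dotd d (xq \<tau>) (xq q)\<bar> \<le>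
            c0 * (R\<^sup>2 / sqrt (real d) + R * sqrt trL / sqrt (real d) + sqrt trL2) * l2)))"

end

theory Submission
  imports Defs "HOL-Probability.Probability"
begin

interpretation PL: product_sigma_finite "\<lambda>_::nat. lborel :: real measure" by standard

abbreviation "MM d \<equiv> PiM {..<d} (\<lambda>_::nat. lborel :: real measure)"

lemma sqnd_meas[measurable]: "(\<lambda>x. sqnd d x) \<in> borel_measurable (MM d)"
  unfolding sqnd_def dotd_def by measurable

lemma ball_sets: "unit_ball_d d \<in> sets (MM d)"
  unfolding unit_ball_d_def by measurable

definition Tm :: "nat \<Rightarrow> (nat \<Rightarrow> real) \<Rightarrow> (nat \<Rightarrow> nat) \<Rightarrow> (nat \<Rightarrow> real) \<Rightarrow> (nat \<Rightarrow> real)" where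
  "Tm d s t x = restrict (\<lambda>i. s i * x (t i)) {..<d}"

lemma Tm_meas[measurable]:
  assumes "\<forall>i<d. t i < d"
  shows "Tm d s t \<in> MM d \<rightarrow>\<^sub>M MM d"
  unfolding Tm_def
  apply (rule measurable_restrict)
  apply measurable
  using assms by auto

lemma scal_pres:
  assumes "c \<in> {-1,1::real}" "B \<in> sets borel"
  shows "emeasure lborel ((\<lambda>v. c * v) -` B) = emeasure lborel B"
proof (cases "c = 1")
  case True then show ?thesis by simp
next
  case False
  then have c: "c = -1" using assms by auto
  have "emeasure lborel ((\<lambda>v. c * v) -` B) = emeasure lborel (uminus -` B \<inter> space lborel)"
    using c by simp
  also have "\<dots> = emeasure (distr lborel borel uminus) B"
    using assms by (subst emeasure_distr) auto
  also have "\<dots> = emeasure lborel B" by (simp add: lborel_distr_uminus)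
  finally show ?thesis .
qed

lemma Tm_pres:
  assumes t: "\<forall>i<d. t i < d \<and> t (t i) = i" and s: "\<forall>i. s i \<in> {-1,1}"
  shows "distr (MM d) (MM d) (Tm d s t) = MM d"
proof (rule PL.PiM_eqI)
  show "finite {..<d}" by simp
  show "sets (distr (MM d) (MM d) (Tm d s t)) = sets (MM d)" by simp
  fix A :: "nat \<Rightarrow> real set" assume A: "\<And>i. i \<in> {..<d} \<Longrightarrow> A i \<in> sets lborel"
  define A' where "A' j = (\<lambda>v. s (t j) * v) -` A (t j)" for j
  have meas: "Tm d s t \<in> MM d \<rightarrow>\<^sub>M MM d" using t by (intro Tm_meas) auto
  have set: "Tm d s t -` PiE {..<d} A \<inter> space (MM d) = PiE {..<d} A'"
  proof (intro set_eqI iffI)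
    fix x assume x: "x \<in> Tm d s t -` PiE {..<d} A \<inter> space (MM d)"
    show "x \<in> PiE {..<d} A'"
    proof (rule PiE_I)
      fix j assume j: "j \<in> {..<d}"
      have "Tm d s t x (t j) \<in> A (t j)" using x t j by (auto simp: PiE_iff)
      then show "x j \<in> A' j" using t j by (auto simp: Tm_def A'_def)
    next
      fix j assume "j \<notin> {..<d}" then show "x j = undefined" using x by (auto simp: space_PiM PiE_iff extensional_def)
    qed
  next
    fix x assume x: "x \<in> PiE {..<d} A'"
    have "x \<in> space (MM d)" using x by (auto simp: space_PiM PiE_iff extensional_def)
    moreover have "Tm d s t x \<in> PiE {..<d} A"
    proof (rule PiE_I)
      fix i assume i: "i \<in> {..<d}"
      have "x (t i) \<in> A' (t i)" using x t i by (auto simp: PiE_iff)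
      then show "Tm d s t x i \<in> A i" using t i by (auto simp: Tm_def A'_def)
    qed (auto simp: Tm_def)
    ultimately show "x \<in> Tm d s t -` PiE {..<d} A \<inter> space (MM d)" by auto
  qed
  have A'm: "A' j \<in> sets lborel" if "j < d" for j
  proof -
    have "A (t j) \<in> sets borel" using A t that by auto
    moreover have "(\<lambda>v::real. s (t j) * v) \<in> borel_measurable borel" by measurable
    ultimately show ?thesis unfolding A'_def using measurable_sets[of "\<lambda>v::real. s (t j) * v" borel borel "A (t j)"] by simp
  qed
  have "emeasure (distr (MM d) (MM d) (Tm d s t)) (PiE {..<d} A) = emeasure (MM d) (PiE {..<d} A')"
    using meas A by (subst emeasure_distr) (auto simp: set)
  also have "\<dots> = (\<Prod>j\<in>{..<d}. emeasure lborel (A' j))"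
    using A'm by (subst PL.emeasure_PiM) auto
  also have "\<dots> = (\<Prod>j\<in>{..<d}. emeasure lborel (A (t j)))"
    unfolding A'_def using s A t by (intro prod.cong refl scal_pres) auto
  also have "\<dots> = (\<Prod>i\<in>{..<d}. emeasure lborel (A i))"
    by (rule prod.reindex_bij_witness[where i=t and j=t]) (use t in auto)
  finally show "emeasure (distr (MM d) (MM d) (Tm d s t)) (PiE {..<d} A) = (\<Prod>i\<in>{..<d}. emeasure lborel (A i))" .
qed

lemma sqnd_Tm:
  assumes t: "\<forall>i<d. t i < d \<and> t (t i) = i" and s: "\<forall>i. s i \<in> {-1,1}"
  shows "sqnd d (Tm d s t x) = sqnd d x"
proof -
  have "sqnd d (Tm d s t x) = (\<Sum>i<d. x (t i) * x (t i))"
    unfolding sqnd_def dotd_def Tm_def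
  proof (intro sum.cong refl)
    fix i assume "i \<in> {..<d}"
    moreover have "s i * s i = 1" using s[rule_format, of i] by auto
    ultimately show "restrict (\<lambda>i. s i * x (t i)) {..<d} i * restrict (\<lambda>i. s i * x (t i)) {..<d} i = x (t i) * x (t i)"
      by (simp add: algebra_simps)
  qed
  also have "\<dots> = (\<Sum>i<d. x i * x i)"
    by (rule sum.reindex_bij_witness[where i=t and j=t]) (use t in auto)
  finally show ?thesis unfolding sqnd_def dotd_def .
qed

definition Qm :: "nat \<Rightarrow> (nat \<Rightarrow> real) measure" where
  "Qm d = uniform_measure (MM d) (unit_ball_d d)"

definition Fs :: "nat \<Rightarrow> real \<Rightarrow> (nat \<Rightarrow> real) \<Rightarrow> (nat \<Rightarrow> real)" where
  "Fs d Rt x = restrict (\<lambda>i. Rt * x i / sqrt (sqnd d x)) {..<d}"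

lemma meas_unif: "measurable (uniform_measure M A) N = measurable M N"
  by (rule measurable_cong_sets) auto

lemma Fs_meas[measurable]: "Fs d Rt \<in> MM d \<rightarrow>\<^sub>M MM d"
  unfolding Fs_def
  apply (rule measurable_restrict)
  unfolding measurable_lborel1 by measurable

lemma unif_sphere_eq: "unif_sphere d Rt = distr (Qm d) (MM d) (Fs d Rt)"
  unfolding unif_sphere_def Qm_def Fs_def ..

lemma Q_pres:
  assumes t: "\<forall>i<d. t i < d \<and> t (t i) = i" and s: "\<forall>i. s i \<in> {-1,1}"
  shows "distr (Qm d) (MM d) (Tm d s t) = Qm d"
proof (rule measure_eqI)
  show "sets (distr (Qm d) (MM d) (Tm d s t)) = sets (Qm d)" by (simp add: Qm_def)
  fix A assume A: "A \<in> sets (distr (Qm d) (MM d) (Tm d s t))"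
  then have A': "A \<in> sets (MM d)" by simp
  have meas: "Tm d s t \<in> MM d \<rightarrow>\<^sub>M MM d" using t by (intro Tm_meas) auto
  then have measQ: "Tm d s t \<in> Qm d \<rightarrow>\<^sub>M MM d" unfolding Qm_def by (simp add: meas_unif)
  have pre: "Tm d s t -` A \<inter> space (MM d) \<in> sets (MM d)" using meas A' by (rule measurable_sets)
  have seteq: "unit_ball_d d \<inter> (Tm d s t -` A \<inter> space (MM d)) = Tm d s t -` (unit_ball_d d \<inter> A) \<inter> space (MM d)"
  proof -
    have "x \<in> unit_ball_d d \<longleftrightarrow> Tm d s t x \<in> unit_ball_d d" if "x \<in> space (MM d)" for x
      using that measurable_space[OF meas that] sqnd_Tm[OF t s, of x] unfolding unit_ball_d_def by auto
    then show ?thesis by auto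
  qed
  have "emeasure (distr (Qm d) (MM d) (Tm d s t)) A = emeasure (Qm d) (Tm d s t -` A \<inter> space (MM d))"
    using measQ A' by (subst emeasure_distr) (auto simp: Qm_def)
  also have "\<dots> = emeasure (MM d) (Tm d s t -` (unit_ball_d d \<inter> A) \<inter> space (MM d)) / emeasure (MM d) (unit_ball_d d)"
    unfolding Qm_def using pre ball_sets by (simp add: seteq)
  also have "\<dots> = emeasure (distr (MM d) (MM d) (Tm d s t)) (unit_ball_d d \<inter> A) / emeasure (MM d) (unit_ball_d d)"
    using meas A' ball_sets by (subst emeasure_distr) auto
  also have "\<dots> = emeasure (Qm d) A"
    unfolding Tm_pres[OF t s] Qm_def using A' ball_sets by simp
  finally show "emeasure (distr (Qm d) (MM d) (Tm d s t)) A = emeasure (Qm d) A" .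
qed

lemma P_pres:
  assumes t: "\<forall>i<d. t i < d \<and> t (t i) = i" and s: "\<forall>i. s i \<in> {-1,1}"
  shows "distr (unif_sphere d Rt) (MM d) (Tm d s t) = unif_sphere d Rt"
proof -
  have meas: "Tm d s t \<in> MM d \<rightarrow>\<^sub>M MM d" using t by (intro Tm_meas) auto
  then have measQ: "Tm d s t \<in> Qm d \<rightarrow>\<^sub>M MM d" unfolding Qm_def by (simp add: meas_unif)
  have FQ: "Fs d Rt \<in> Qm d \<rightarrow>\<^sub>M MM d" unfolding Qm_def by (simp add: meas_unif)
  have comm: "Tm d s t (Fs d Rt x) = Fs d Rt (Tm d s t x)" for x
  proof -
    have "sqnd d (Tm d s t x) = sqnd d x" by (rule sqnd_Tm[OF t s])
    then show ?thesis using t unfolding Tm_def Fs_def by (auto simp: fun_eq_iff)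
  qed
  have "distr (unif_sphere d Rt) (MM d) (Tm d s t) = distr (Qm d) (MM d) (Tm d s t \<circ> Fs d Rt)"
    unfolding unif_sphere_eq using meas FQ by (subst distr_distr) auto
  also have "\<dots> = distr (Qm d) (MM d) (Fs d Rt \<circ> Tm d s t)"
    by (simp add: comp_def comm)
  also have "\<dots> = distr (distr (Qm d) (MM d) (Tm d s t)) (MM d) (Fs d Rt)"
    using measQ by (subst distr_distr) auto
  also have "\<dots> = unif_sphere d Rt" unfolding Q_pres[OF t s] unif_sphere_eq ..
  finally show ?thesis .
qed

lemma ball_pos_fin:
  assumes d: "d \<ge> 1"
  shows "emeasure (MM d) (unit_ball_d d) \<noteq> 0" "emeasure (MM d) (unit_ball_d d) \<noteq> \<infinity>"
proof -
  let ?a = "1 / real d"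
  have box_sets: "PiE {..<d} (\<lambda>_. {-?a<..<?a}) \<in> sets (MM d)"
    by (rule sets_PiM_I_finite) auto
  have sub: "PiE {..<d} (\<lambda>_. {-?a<..<?a}) \<subseteq> unit_ball_d d"
  proof
    fix x assume x: "x \<in> PiE {..<d} (\<lambda>_. {-?a<..<?a})"
    have "sqnd d x < (\<Sum>i<d. ?a * ?a)"
      unfolding sqnd_def dotd_def
    proof (rule sum_strict_mono)
      show "{..<d} \<noteq> {}" using d by (simp add: lessThan_empty_iff)
      fix i assume "i \<in> {..<d}"
      then have "-?a < x i \<and> x i < ?a" using x by (auto simp: PiE_iff)
      then have "\<bar>x i\<bar> < ?a" by linarith
      then show "x i * x i < ?a * ?a"
        by (metis abs_mult_self_eq abs_mult_less)
    qed simp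
    also have "\<dots> = 1 / real d" using d by (simp add: field_simps)
    also have "\<dots> \<le> 1" using d by simp
    finally have "sqnd d x < 1" .
    moreover have "x \<in> space (MM d)" using x by (auto simp: space_PiM PiE_iff)
    ultimately show "x \<in> unit_ball_d d" unfolding unit_ball_d_def by auto
  qed
  have "emeasure (MM d) (PiE {..<d} (\<lambda>_. {-?a<..<?a})) = (\<Prod>i<d. ennreal (2 * ?a))"
    using d by (subst PL.emeasure_PiM) (auto intro!: prod.cong)
  also have "\<dots> > 0" using d by (simp add: ennreal_power)
  finally have "0 < emeasure (MM d) (unit_ball_d d)"
    using emeasure_mono[OF sub ball_sets] by (metis order_less_le_trans)
  then show "emeasure (MM d) (unit_ball_d d) \<noteq> 0" by simp
  have box2_sets: "PiE {..<d} (\<lambda>_. {-1..1::real}) \<in> sets (MM d)"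
    by (rule sets_PiM_I_finite) auto
  have sub2: "unit_ball_d d \<subseteq> PiE {..<d} (\<lambda>_. {-1..1::real})"
  proof
    fix x assume x: "x \<in> unit_ball_d d"
    then have sp: "x \<in> space (MM d)" and s1: "sqnd d x < 1" unfolding unit_ball_d_def by auto
    show "x \<in> PiE {..<d} (\<lambda>_. {-1..1::real})"
    proof (rule PiE_I)
      fix i assume i: "i \<in> {..<d}"
      have "x i * x i \<le> sqnd d x" unfolding sqnd_def dotd_def
        using i by (intro member_le_sum) auto
      then have "x i * x i \<le> 1" using s1 by simp
      then have "\<bar>x i\<bar> \<le> 1" by (metis abs_le_square_iff abs_one mult_1 power2_eq_square)
      then show "x i \<in> {-1..1}" by auto
    next
      fix i assume "i \<notin> {..<d}" then show "x i = undefined" using sp by (auto simp: space_PiM PiE_iff extensional_def)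
    qed
  qed
  have "emeasure (MM d) (unit_ball_d d) \<le> emeasure (MM d) (PiE {..<d} (\<lambda>_. {-1..1::real}))"
    using emeasure_mono[OF sub2 box2_sets] .
  also have "\<dots> = (\<Prod>i<d. ennreal 2)"
    by (subst PL.emeasure_PiM) auto
  also have "\<dots> < \<infinity>" by (simp add: power_less_top_ennreal)
  finally show "emeasure (MM d) (unit_ball_d d) \<noteq> \<infinity>" by simp
qed

lemma Q_prob: "d \<ge> 1 \<Longrightarrow> prob_space (Qm d)"
  unfolding Qm_def using ball_pos_fin by (intro prob_space_uniform_measure) auto

lemma P_prob: "d \<ge> 1 \<Longrightarrow> prob_space (unif_sphere d Rt)"
  unfolding unif_sphere_eq using Q_prob by (intro prob_space.prob_space_distr) (auto simp: Qm_def meas_unif)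

lemma AE_nz:
  assumes d: "d \<ge> 1"
  shows "AE x in Qm d. sqnd d x \<noteq> 0"
proof (rule AE_I')
  let ?N = "PiE {..<d} (\<lambda>_. {0::real})"
  have Ns: "?N \<in> sets (MM d)" by (rule sets_PiM_I_finite) auto
  have "emeasure (MM d) ?N = (\<Prod>i<d. emeasure lborel {0::real})"
    by (subst PL.emeasure_PiM) auto
  also have "\<dots> = 0" using d by simp
  finally have N0: "emeasure (MM d) ?N = 0" .
  have "emeasure (Qm d) ?N = emeasure (MM d) (unit_ball_d d \<inter> ?N) / emeasure (MM d) (unit_ball_d d)"
    unfolding Qm_def using Ns ball_sets by simp
  also have "emeasure (MM d) (unit_ball_d d \<inter> ?N) = 0"
    using emeasure_mono[of "unit_ball_d d \<inter> ?N" ?N "MM d"] Ns N0 by auto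
  finally show "?N \<in> null_sets (Qm d)" using Ns by (simp add: Qm_def null_sets_def)
  show "{x \<in> space (Qm d). \<not> sqnd d x \<noteq> 0} \<subseteq> ?N"
  proof
    fix x assume x: "x \<in> {x \<in> space (Qm d). \<not> sqnd d x \<noteq> 0}"
    then have sp: "x \<in> space (MM d)" and z: "(\<Sum>i<d. x i * x i) = 0"
      by (auto simp: Qm_def sqnd_def dotd_def)
    have "\<forall>i\<in>{..<d}. x i * x i = 0" using z by (subst sum_nonneg_eq_0_iff[symmetric]) auto
    then show "x \<in> ?N" using sp by (auto simp: space_PiM PiE_iff extensional_def)
  qed
qed

lemma sqnd_nonneg: "sqnd d x \<ge> 0"
  unfolding sqnd_def dotd_def by (intro sum_nonneg) auto

lemma coord_le: "i < d \<Longrightarrow> x i * x i \<le> sqnd d x"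
  unfolding sqnd_def dotd_def by (intro member_le_sum) auto

lemma Fs_bound: assumes i: "i < d" shows "\<bar>Fs d Rt x i\<bar> \<le> \<bar>Rt\<bar>"
proof (cases "i < d \<and> sqnd d x \<noteq> 0")
  case True
  then have pos: "sqrt (sqnd d x) > 0" using sqnd_nonneg[of d x] by auto
  have "\<bar>x i\<bar> \<le> sqrt (sqnd d x)"
    using coord_le[of i d x] True real_le_rsqrt[of "\<bar>x i\<bar>" "sqnd d x"] by (simp add: power2_eq_square)
  then have "\<bar>x i\<bar> / sqrt (sqnd d x) \<le> 1" using pos by simp
  then have "\<bar>Rt\<bar> * (\<bar>x i\<bar> / sqrt (sqnd d x)) \<le> \<bar>Rt\<bar> * 1"
    by (intro mult_left_mono) auto
  then show ?thesis using True pos by (simp add: Fs_def abs_mult)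
next
  case False then show ?thesis using i by (auto simp: Fs_def)
qed

lemma sqnd_Fs: "sqnd d x \<noteq> 0 \<Longrightarrow> sqnd d (Fs d Rt x) = Rt\<^sup>2"
proof -
  assume nz: "sqnd d x \<noteq> 0"
  then have pos: "sqnd d x > 0" using sqnd_nonneg[of d x] by auto
  have "sqnd d (Fs d Rt x) = (\<Sum>i<d. Fs d Rt x i * Fs d Rt x i)"
    by (simp add: sqnd_def dotd_def)
  also have "\<dots> = (\<Sum>i<d. (Rt\<^sup>2 / sqnd d x) * (x i * x i))"
    using pos by (intro sum.cong refl) (simp add: power2_eq_square Fs_def)
  also have "\<dots> = Rt\<^sup>2 / sqnd d x * sqnd d x"
    by (simp add: sum_distrib_left sqnd_def dotd_def)
  finally show ?thesis using nz by simp
qed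

lemma measP: "measurable (unif_sphere d Rt) N = measurable (MM d) N"
  by (rule measurable_cong_sets) (simp_all add: unif_sphere_eq)

lemma integrable_P:
  assumes d: "d \<ge> 1" and ab: "a < d" "b < d"
  shows "integrable (unif_sphere d Rt) (\<lambda>m. m a * m b)"
proof -
  interpret Q: prob_space "Qm d" using Q_prob[OF d] .
  have FQ: "Fs d Rt \<in> Qm d \<rightarrow>\<^sub>M MM d" unfolding Qm_def by (simp add: meas_unif)
  have g: "(\<lambda>m. m a * m b) \<in> borel_measurable (MM d)"
  proof -
    have "(\<lambda>x. x a) \<in> MM d \<rightarrow>\<^sub>M lborel" "(\<lambda>x. x b) \<in> MM d \<rightarrow>\<^sub>M lborel"
      using ab by (intro measurable_component_singleton; simp)+
    then show ?thesis by (intro borel_measurable_times) auto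
  qed
  have "integrable (Qm d) (\<lambda>x. Fs d Rt x a * Fs d Rt x b)"
  proof (rule Q.integrable_const_bound[where B="Rt\<^sup>2"])
    show "AE x in Qm d. norm (Fs d Rt x a * Fs d Rt x b) \<le> Rt\<^sup>2"
    proof (rule AE_I2)
      fix x
      have "\<bar>Fs d Rt x a\<bar> * \<bar>Fs d Rt x b\<bar> \<le> \<bar>Rt\<bar> * \<bar>Rt\<bar>"
        using Fs_bound[of a d Rt x] Fs_bound[of b d Rt x] ab by (intro mult_mono) auto
      then show "norm (Fs d Rt x a * Fs d Rt x b) \<le> Rt\<^sup>2" by (simp add: abs_mult power2_eq_square)
    qed
    show "(\<lambda>x. Fs d Rt x a * Fs d Rt x b) \<in> borel_measurable (Qm d)"
      using measurable_comp[OF FQ g] by (simp add: comp_def)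
  qed
  then show ?thesis unfolding unif_sphere_eq using integrable_distr_eq[OF FQ g] by simp
qed

lemma P_sym:
  fixes g :: "(nat \<Rightarrow> real) \<Rightarrow> real"
  assumes t: "\<forall>i<d. t i < d \<and> t (t i) = i" and s: "\<forall>i. s i \<in> {-1,1}"
    and g: "g \<in> borel_measurable (MM d)"
  shows "integral\<^sup>L (unif_sphere d Rt) g = integral\<^sup>L (unif_sphere d Rt) (\<lambda>m. g (Tm d s t m))"
proof -
  have T: "Tm d s t \<in> unif_sphere d Rt \<rightarrow>\<^sub>M MM d"
    unfolding measP using t by (intro Tm_meas) auto
  show ?thesis using integral_distr[OF T g] unfolding P_pres[OF t s] .
qed

lemma comp_meas: "a < d \<Longrightarrow> b < d \<Longrightarrow> (\<lambda>m::nat\<Rightarrow>real. m a * m b) \<in> borel_measurable (MM d)"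
proof -
  assume ab: "a < d" "b < d"
  have "(\<lambda>x. x a) \<in> MM d \<rightarrow>\<^sub>M lborel" "(\<lambda>x. x b) \<in> MM d \<rightarrow>\<^sub>M lborel"
    using ab by (intro measurable_component_singleton; simp)+
  then show ?thesis by (intro borel_measurable_times) auto
qed

lemma mom_off:
  assumes ab: "a < d" "b < d" "a \<noteq> b"
  shows "integral\<^sup>L (unif_sphere d Rt) (\<lambda>m. m a * m b) = 0"
proof -
  let ?s = "\<lambda>i. if i = a then -1 else (1::real)"
  have "integral\<^sup>L (unif_sphere d Rt) (\<lambda>m. m a * m b) =
        integral\<^sup>L (unif_sphere d Rt) (\<lambda>m. Tm d ?s id m a * Tm d ?s id m b)"
    by (rule P_sym) (use ab comp_meas in auto)
  also have "\<dots> = integral\<^sup>L (unif_sphere d Rt) (\<lambda>m. - (m a * m b))"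
    using ab by (intro Bochner_Integration.integral_cong) (auto simp: Tm_def)
  also have "\<dots> = - integral\<^sup>L (unif_sphere d Rt) (\<lambda>m. m a * m b)"
    by simp
  finally show ?thesis by simp
qed

lemma mom_swap:
  assumes ab: "a < d" "b < d"
  shows "integral\<^sup>L (unif_sphere d Rt) (\<lambda>m. m a * m a) = integral\<^sup>L (unif_sphere d Rt) (\<lambda>m. m b * m b)"
proof -
  let ?t = "\<lambda>i. if i = a then b else if i = b then a else i"
  have "integral\<^sup>L (unif_sphere d Rt) (\<lambda>m. m a * m a) =
        integral\<^sup>L (unif_sphere d Rt) (\<lambda>m. Tm d (\<lambda>_. 1) ?t m a * Tm d (\<lambda>_. 1) ?t m a)"
    by (rule P_sym) (use ab comp_meas in auto)
  also have "\<dots> = integral\<^sup>L (unif_sphere d Rt) (\<lambda>m. m b * m b)"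
    using ab by (intro Bochner_Integration.integral_cong) (auto simp: Tm_def)
  finally show ?thesis .
qed

lemma mom_sum:
  assumes d: "d \<ge> 1"
  shows "(\<Sum>i<d. integral\<^sup>L (unif_sphere d Rt) (\<lambda>m. m i * m i)) = Rt\<^sup>2"
proof -
  interpret P: prob_space "unif_sphere d Rt" using P_prob[OF d] .
  have FQ: "Fs d Rt \<in> Qm d \<rightarrow>\<^sub>M MM d" unfolding Qm_def by (simp add: meas_unif)
  have "(\<Sum>i<d. integral\<^sup>L (unif_sphere d Rt) (\<lambda>m. m i * m i)) =
      integral\<^sup>L (unif_sphere d Rt) (\<lambda>m. \<Sum>i<d. m i * m i)"
    by (subst Bochner_Integration.integral_sum) (use integrable_P[OF d] in auto)
  also have "\<dots> = integral\<^sup>L (unif_sphere d Rt) (\<lambda>m. Rt\<^sup>2)"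
  proof (rule integral_cong_AE)
    show "(\<lambda>m. \<Sum>i<d. m i * m i) \<in> borel_measurable (unif_sphere d Rt)"
      unfolding measP using comp_meas by (intro borel_measurable_sum) auto
    show "(\<lambda>m. Rt\<^sup>2) \<in> borel_measurable (unif_sphere d Rt)" by simp
    have "AE x in Qm d. sqnd d (Fs d Rt x) = Rt\<^sup>2"
      using AE_nz[OF d] by eventually_elim (rule sqnd_Fs)
    then show "AE m in unif_sphere d Rt. (\<Sum>i<d. m i * m i) = Rt\<^sup>2"
      unfolding unif_sphere_eq
      by (subst AE_distr_iff[OF FQ]) (auto simp: sqnd_def dotd_def)
  qed
  also have "\<dots> = Rt\<^sup>2" by (simp add: P.prob_space)
  finally show ?thesis .
qed

lemma mom_diag:
  assumes d: "d \<ge> 1" and a: "a < d"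
  shows "integral\<^sup>L (unif_sphere d Rt) (\<lambda>m. m a * m a) = Rt\<^sup>2 / real d"
proof -
  have "Rt\<^sup>2 = (\<Sum>i<d. integral\<^sup>L (unif_sphere d Rt) (\<lambda>m. m a * m a))"
    unfolding mom_sum[OF d, symmetric]
  proof (intro sum.cong refl)
    fix i assume "i \<in> {..<d}"
    then show "integral\<^sup>L (unif_sphere d Rt) (\<lambda>m. m i * m i) = integral\<^sup>L (unif_sphere d Rt) (\<lambda>m. m a * m a)"
      using mom_swap[of i d a Rt] a by simp
  qed
  also have "\<dots> = real d * integral\<^sup>L (unif_sphere d Rt) (\<lambda>m. m a * m a)" by simp
  finally show ?thesis using d by (simp add: field_simps)
qed

lemma expect_quad:
  assumes d: "d \<ge> 1"
  shows "integral\<^sup>L (unif_sphere d Rt) (\<lambda>m. dotd d m (mvd d W m)) = Rt\<^sup>2 / real d * trd d W"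
proof -
  have "integral\<^sup>L (unif_sphere d Rt) (\<lambda>m. dotd d m (mvd d W m)) =
        integral\<^sup>L (unif_sphere d Rt) (\<lambda>m. \<Sum>i<d. \<Sum>j<d. W i j * (m i * m j))"
    unfolding dotd_def mvd_def by (intro Bochner_Integration.integral_cong refl) (simp add: sum_distrib_left mult_ac)
  also have "\<dots> = (\<Sum>i<d. \<Sum>j<d. W i j * integral\<^sup>L (unif_sphere d Rt) (\<lambda>m. m i * m j))"
  proof -
    have int: "integrable (unif_sphere d Rt) (\<lambda>m. W i j * (m i * m j))" if "i < d" "j < d" for i j
      using integrable_P[OF d that] by simp
    have "integral\<^sup>L (unif_sphere d Rt) (\<lambda>m. \<Sum>i<d. \<Sum>j<d. W i j * (m i * m j)) =
        (\<Sum>i<d. integral\<^sup>L (unif_sphere d Rt) (\<lambda>m. \<Sum>j<d. W i j * (m i * m j)))"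
      by (subst Bochner_Integration.integral_sum) (use int in auto)
    also have "\<dots> = (\<Sum>i<d. \<Sum>j<d. integral\<^sup>L (unif_sphere d Rt) (\<lambda>m. W i j * (m i * m j)))"
      by (intro sum.cong refl, subst Bochner_Integration.integral_sum) (use int in auto)
    finally show ?thesis by simp
  qed
  also have "\<dots> = (\<Sum>i<d. W i i * (Rt\<^sup>2 / real d))"
  proof (intro sum.cong refl)
    fix i assume i: "i \<in> {..<d}"
    have "(\<Sum>j<d. W i j * integral\<^sup>L (unif_sphere d Rt) (\<lambda>m. m i * m j)) =
          (\<Sum>j<d. if j = i then W i i * (Rt\<^sup>2 / real d) else 0)"
    proof (intro sum.cong refl)
      fix j assume j: "j \<in> {..<d}"
      show "W i j * integral\<^sup>L (unif_sphere d Rt) (\<lambda>m. m i * m j) = (if j = i then W i i * (Rt\<^sup>2 / real d) else 0)"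
      proof (cases "j = i")
        case True then show ?thesis using mom_diag[OF d, of i Rt] i by simp
      next
        case False then show ?thesis using mom_off[of i d j Rt] i j by simp
      qed
    qed
    then show "(\<Sum>j<d. W i j * integral\<^sup>L (unif_sphere d Rt) (\<lambda>m. m i * m j)) = W i i * (Rt\<^sup>2 / real d)"
      using i by simp
  qed
  also have "\<dots> = Rt\<^sup>2 / real d * trd d W" by (simp add: trd_def sum_distrib_left sum_divide_distrib mult_ac)
  finally show ?thesis .
qed



definition fip :: "nat \<Rightarrow> (nat \<Rightarrow> nat \<Rightarrow> real) \<Rightarrow> (nat \<Rightarrow> nat \<Rightarrow> real) \<Rightarrow> real" where
  "fip d U V = (\<Sum>i<d. \<Sum>j<d. U i j * V i j)"

lemma fro2_fip: "fro2 d U = fip d U U"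
  unfolding fro2_def fip_def by (simp add: power2_eq_square)

lemma sum2_lin3:
  assumes "\<And>i j. f i j = a * p i j + b * q i j + c * (r i j :: real)"
  shows "(\<Sum>i<d. \<Sum>j<(d::nat). f i j) = a * (\<Sum>i<d. \<Sum>j<d. p i j) + b * (\<Sum>i<d. \<Sum>j<d. q i j) + c * (\<Sum>i<d. \<Sum>j<d. r i j)"
  by (simp add: assms sum.distrib sum_distrib_left)

lemma fro2_nonneg: "fro2 d U \<ge> 0"
  unfolding fro2_def by (intro sum_nonneg) auto

lemma fro2_zero_imp: "fro2 d U \<le> 0 \<Longrightarrow> i < d \<Longrightarrow> j < d \<Longrightarrow> U i j = 0"
proof -
  assume h: "fro2 d U \<le> 0" "i < d" "j < d"
  have "(U i j)\<^sup>2 \<le> (\<Sum>j<d. (U i j)\<^sup>2)" using h by (intro member_le_sum) auto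
  also have "\<dots> \<le> fro2 d U" unfolding fro2_def using h
    by (intro member_le_sum[where f = "\<lambda>i. \<Sum>j<d. (U i j)\<^sup>2"]) (auto intro: sum_nonneg)
  finally have "(U i j)\<^sup>2 \<le> 0" using h by linarith
  then have "(U i j)\<^sup>2 = 0" using zero_le_power2[of "U i j"] by linarith
  then show ?thesis by simp
qed

lemma coord_sq_le_fro2: "i < d \<Longrightarrow> j < d \<Longrightarrow> (U i j)\<^sup>2 \<le> fro2 d U"
proof -
  assume h: "i < d" "j < d"
  have "(U i j)\<^sup>2 \<le> (\<Sum>j<d. (U i j)\<^sup>2)" using h by (intro member_le_sum) auto
  also have "\<dots> \<le> fro2 d U" unfolding fro2_def using h
    by (intro member_le_sum[where f = "\<lambda>i. \<Sum>j<d. (U i j)\<^sup>2"]) (auto intro: sum_nonneg)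
  finally show ?thesis .
qed

lemma parallelogram:
  "fro2 d (\<lambda>i j. U i j - V i j) = 2 * fro2 d U + 2 * fro2 d V - 4 * fro2 d (\<lambda>i j. (U i j + V i j) / 2)"
proof -
  have "fro2 d (\<lambda>i j. U i j - V i j) + 4 * fro2 d (\<lambda>i j. (U i j + V i j) / 2) = 2 * fro2 d U + 2 * fro2 d V + 0 * fro2 d U"
    unfolding fro2_def sum.distrib[symmetric] sum_distrib_left
    by (intro sum.cong refl) (simp add: power2_eq_square field_simps)
  then show ?thesis by simp
qed

lemma fro2_line:
  "fro2 d (\<lambda>i j. W i j + t * (U i j - W i j)) = fro2 d W + 2 * t * (fip d W U - fro2 d W) + t\<^sup>2 * fro2 d (\<lambda>i j. U i j - W i j)"
  unfolding fro2_def fip_def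
  by (subst sum2_lin3[where a=1 and b="2*t" and c="t\<^sup>2" and p="\<lambda>i j. (W i j)\<^sup>2" and q="\<lambda>i j. W i j * U i j - (W i j)\<^sup>2"
        and r="\<lambda>i j. (U i j - W i j)\<^sup>2"]) (simp_all add: power2_eq_square algebra_simps sum_subtractf)

lemma fip_CS: "(fip d U V)\<^sup>2 \<le> fro2 d U * fro2 d V"
proof -
  have e: "(\<Sum>i<d. \<Sum>j<d. f i j) = (\<Sum>p\<in>{..<d}\<times>{..<d}. f (fst p) (snd p))" for f :: "nat \<Rightarrow> nat \<Rightarrow> real"
    by (simp add: sum.cartesian_product case_prod_beta)
  show ?thesis unfolding fip_def fro2_def e
    by (rule Cauchy_Schwarz_ineq_sum)
qed

lemma constr_fip:
  "dotd d a (mvd d U v) = fip d U (\<lambda>i j. a i * v j)"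
  unfolding dotd_def mvd_def fip_def by (simp add: sum_distrib_left mult_ac)

lemma feas_conv:
  assumes "mm_feasible d B mh xq yq U" "mm_feasible d B mh xq yq V" "0 \<le> t" "t \<le> 1"
  shows "mm_feasible d B mh xq yq (\<lambda>i j. U i j + t * (V i j - U i j))"
  unfolding mm_feasible_def
proof (intro allI impI)
  fix \<tau> assume \<tau>: "\<tau> < B"
  let ?A = "\<lambda>i j. mh \<tau> i * (yq \<tau> * xq \<tau> j)"
  have u: "fip d U ?A \<ge> 1" "fip d V ?A \<ge> 1" using assms \<tau> unfolding mm_feasible_def constr_fip by auto
  have "fip d (\<lambda>i j. U i j + t * (V i j - U i j)) ?A = (1 - t) * fip d U ?A + t * fip d V ?A"
    unfolding fip_def by (simp add: algebra_simps sum.distrib sum_distrib_left sum_subtractf)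
  also have "\<dots> \<ge> (1 - t) * 1 + t * 1"
    using u assms by (intro add_mono mult_left_mono) auto
  finally show "dotd d (mh \<tau>) (mvd d (\<lambda>i j. U i j + t * (V i j - U i j)) (\<lambda>k. yq \<tau> * xq \<tau> k)) \<ge> 1"
    unfolding constr_fip by simp
qed

lemma dmat_conv: "U \<in> dmat d \<Longrightarrow> V \<in> dmat d \<Longrightarrow> (\<lambda>i j. U i j + t * (V i j - U i j)) \<in> dmat d"
  unfolding dmat_def by auto

lemma mid_eq: "(\<lambda>i j. U i j + (V i j - U i j) / 2) = (\<lambda>i j. (U i j + (V i j::real)) / 2)"
  by (auto simp: fun_eq_iff field_simps)

lemma fip_tendsto:
  assumes "\<And>i j. i < d \<Longrightarrow> j < d \<Longrightarrow> (\<lambda>n. Us n i j) \<longlonglongrightarrow> W i j"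
  shows "(\<lambda>n. fip d (Us n) A) \<longlonglongrightarrow> fip d W A"
  unfolding fip_def using assms by (intro tendsto_sum tendsto_mult_right) auto

lemma fro2_tendsto:
  assumes "\<And>i j. i < d \<Longrightarrow> j < d \<Longrightarrow> (\<lambda>n. Us n i j) \<longlonglongrightarrow> W i j"
  shows "(\<lambda>n. fro2 d (Us n)) \<longlonglongrightarrow> fro2 d W"
  unfolding fro2_def using assms by (intro tendsto_sum tendsto_power) auto

lemma mm_exists_unique:
  assumes U0: "U0 \<in> dmat d" "mm_feasible d B mh xq yq U0"
  shows "\<exists>!W. is_max_margin d B mh xq yq W"
proof -
  define F where "F = {U. U \<in> dmat d \<and> mm_feasible d B mh xq yq U}"
  define m where "m = Inf (fro2 d ` F)"
  have Fne: "fro2 d ` F \<noteq> {}" using U0 unfolding F_def by auto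
  have bdd: "bdd_below (fro2 d ` F)" using fro2_nonneg by (intro bdd_belowI[of _ 0]) auto
  have mle: "m \<le> fro2 d U" if "U \<in> F" for U
    unfolding m_def using bdd that by (intro cInf_lower) auto
  have mid: "(\<lambda>i j. U i j + 1/2 * (V i j - U i j)) \<in> F" if "U \<in> F" "V \<in> F" for U V
    using that dmat_conv[of U d V "1/2"] feas_conv[of d B mh xq yq U V "1/2"] unfolding F_def by auto
  have ex: "\<exists>U\<in>F. fro2 d U < m + inverse (real (Suc n))" for n
  proof -
    have "Inf (fro2 d ` F) < m + inverse (real (Suc n))" unfolding m_def by simp
    then show ?thesis using cInf_less_iff[OF Fne bdd] by auto
  qed
  then obtain Us where Us: "\<And>n. Us n \<in> F" "\<And>n. fro2 d (Us n) < m + inverse (real (Suc n))"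
    by metis
  have close: "fro2 d (\<lambda>i j. Us n i j - Us k i j) \<le> 2 * inverse (real (Suc n)) + 2 * inverse (real (Suc k))" for n k
  proof -
    have "m \<le> fro2 d (\<lambda>i j. (Us n i j + Us k i j) / 2)"
      using mle[OF mid[OF Us(1)[of n] Us(1)[of k]]] by (simp add: mid_eq)
    then show ?thesis using parallelogram[of d "Us n" "Us k"] Us(2)[of n] Us(2)[of k] by linarith
  qed
  have cauchy: "Cauchy (\<lambda>n. Us n i j)" if ij: "i < d" "j < d" for i j
  proof (rule CauchyI)
    fix e :: real assume e: "e > 0"
    obtain M :: nat where M: "4 / e\<^sup>2 < real M" using reals_Archimedean2 by blast
    have "4 / e\<^sup>2 > 0" using e by simp
    then have Mpos: "real M > 0" using M by linarith
    show "\<exists>M. \<forall>m\<ge>M. \<forall>n\<ge>M. norm (Us m i j - Us n i j) < e"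
    proof (intro exI allI impI)
      fix n k assume nk: "M \<le> n" "M \<le> k"
      have inv: "inverse (real (Suc n)) \<le> inverse (real M)" "inverse (real (Suc k)) \<le> inverse (real M)"
        using nk Mpos by (auto intro!: le_imp_inverse_le)
      have "(Us n i j - Us k i j)\<^sup>2 \<le> fro2 d (\<lambda>i j. Us n i j - Us k i j)"
        using coord_sq_le_fro2[OF ij, of "\<lambda>i j. Us n i j - Us k i j"] by simp
      also have "\<dots> \<le> 4 * inverse (real M)" using close[of n k] inv by linarith
      also have "\<dots> < e\<^sup>2" using M Mpos e by (simp add: field_simps)
      finally have "(Us n i j - Us k i j)\<^sup>2 < e\<^sup>2" .
      then have "\<bar>Us n i j - Us k i j\<bar> < e" using power2_less_imp_less[of "\<bar>Us n i j - Us k i j\<bar>" e] e by simp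
      then show "norm (Us n i j - Us k i j) < e" by simp
    qed
  qed
  define W where "W i j = (if i < d \<and> j < d then lim (\<lambda>n. Us n i j) else 0)" for i j
  have lim: "(\<lambda>n. Us n i j) \<longlonglongrightarrow> W i j" if "i < d" "j < d" for i j
    using cauchy[OF that] that unfolding W_def by (simp add: Cauchy_convergent_iff convergent_LIMSEQ_iff)
  have Wd: "W \<in> dmat d" unfolding dmat_def W_def by auto
  have lim1: "(\<lambda>n. fro2 d (Us n)) \<longlonglongrightarrow> fro2 d W" by (rule fro2_tendsto) (use lim in auto)
  have lim2: "(\<lambda>n. fro2 d (Us n)) \<longlonglongrightarrow> m"
  proof (rule tendsto_sandwich[of "\<lambda>n. m" _ _ "\<lambda>n. m + inverse (real (Suc n))"])
    show "\<forall>\<^sub>F n in sequentially. m \<le> fro2 d (Us n)" using mle Us by auto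
    show "\<forall>\<^sub>F n in sequentially. fro2 d (Us n) \<le> m + inverse (real (Suc n))" using Us(2) by (intro always_eventually allI less_imp_le) auto
    show "(\<lambda>n. m + inverse (real (Suc n))) \<longlonglongrightarrow> m"
      using tendsto_add[OF tendsto_const LIMSEQ_inverse_real_of_nat, of m] by simp
  qed simp
  have fW: "fro2 d W = m" using LIMSEQ_unique[OF lim1 lim2] .
  have Wfeas: "mm_feasible d B mh xq yq W"
    unfolding mm_feasible_def constr_fip
  proof (intro allI impI)
    fix \<tau> assume \<tau>: "\<tau> < B"
    let ?A = "\<lambda>i j. mh \<tau> i * (yq \<tau> * xq \<tau> j)"
    have "(\<lambda>n. fip d (Us n) ?A) \<longlonglongrightarrow> fip d W ?A" by (rule fip_tendsto) (use lim in auto)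
    moreover have "\<forall>n. 1 \<le> fip d (Us n) ?A"
      using Us(1) \<tau> unfolding F_def mm_feasible_def constr_fip by auto
    ultimately show "1 \<le> fip d W ?A" by (intro LIMSEQ_le_const) auto
  qed
  have Wmm: "is_max_margin d B mh xq yq W"
    unfolding is_max_margin_def using Wd Wfeas fW mle unfolding F_def by auto
  have uniq: "W1 = W2" if w1: "is_max_margin d B mh xq yq W1" and w2: "is_max_margin d B mh xq yq W2" for W1 W2
  proof -
    have F1: "W1 \<in> F" and F2: "W2 \<in> F" using w1 w2 unfolding is_max_margin_def F_def by auto
    have eq: "fro2 d W1 = fro2 d W2" using w1 w2 F1 F2 unfolding is_max_margin_def F_def
      by (meson order.antisym)
    have "fro2 d W1 \<le> fro2 d (\<lambda>i j. (W1 i j + W2 i j) / 2)"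
      using w1 mid[OF F1 F2] unfolding is_max_margin_def F_def by (auto simp: mid_eq)
    then have z: "fro2 d (\<lambda>i j. W1 i j - W2 i j) \<le> 0" using parallelogram[of d W1 W2] eq by linarith
    show ?thesis
    proof (intro ext)
      fix i j
      show "W1 i j = W2 i j"
      proof (cases "i < d \<and> j < d")
        case True then show ?thesis using fro2_zero_imp[OF z] by auto
      next
        case False then show ?thesis using F1 F2 unfolding F_def dmat_def by auto
      qed
    qed
  qed
  show ?thesis using Wmm uniq by blast
qed

lemma mm_variational:
  assumes W: "is_max_margin d B mh xq yq W" and U: "U \<in> dmat d" "mm_feasible d B mh xq yq U"
  shows "fip d W U \<ge> fro2 d W"
proof (rule ccontr)
  assume "\<not> fip d W U \<ge> fro2 d W"
  then have e: "fro2 d W - fip d W U > 0" by simp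
  define e' where "e' = fro2 d W - fip d W U"
  define K where "K = fro2 d (\<lambda>i j. U i j - W i j)"
  have K: "K \<ge> 0" unfolding K_def by (rule fro2_nonneg)
  define t where "t = min 1 (e' / (K + 1))"
  have t0: "t > 0" unfolding t_def e'_def using e K by auto
  have t1: "t \<le> 1" unfolding t_def by simp
  have tK: "t * K < e'"
  proof -
    have "t * K \<le> e' / (K + 1) * K" unfolding t_def using K by (intro mult_right_mono) auto
    also have "\<dots> < e'" using K e unfolding e'_def by (simp add: field_simps)
    finally show ?thesis .
  qed
  have Wd: "W \<in> dmat d" and Wf: "mm_feasible d B mh xq yq W" using W unfolding is_max_margin_def by auto
  have "fro2 d W \<le> fro2 d (\<lambda>i j. W i j + t * (U i j - W i j))"
    using W dmat_conv[OF Wd U(1)] feas_conv[OF Wf U(2)] t0 t1 unfolding is_max_margin_def by auto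
  also have "\<dots> = fro2 d W - 2 * t * e' + t\<^sup>2 * K"
    unfolding fro2_line K_def e'_def by (simp add: algebra_simps)
  finally have "0 \<le> t * (t * K - 2 * e')" by (simp add: power2_eq_square algebra_simps)
  moreover have "t * K - 2 * e' < 0" using tK e e'_def by linarith
  ultimately show False using t0 by (simp add: mult_less_0_iff zero_le_mult_iff)
qed


lemma prelim:
  fixes c0 C R \<delta> :: real and d B N :: nat and L :: "nat \<Rightarrow> nat \<Rightarrow> real"
  assumes c0: "c0 > 1" and C: "C \<ge> 10000 * c0\<^sup>2" and B: "B \<ge> 1" and N: "N \<ge> 1" and R: "R > 0"
    and \<delta>: "0 < \<delta>" "\<delta> < 1" and L: "sym_pd d L"
    and A1: "R\<^sup>2 \<ge> max (C\<^sup>2 * sqrt (real d * trd d (mmd d L L)))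
                 (C\<^sup>2 * max (max (trd d L / real d) (sqrt (trd d (mmd d L L) / real N))) (opnorm2 d L) * ln (2 * real B / \<delta>))"
    and A3: "real d \<ge> C * (ln (2 * (real B)\<^sup>2 / \<delta>)) ^ 4"
  shows "d \<ge> 1 \<and> 0 < ln (2 * real B / \<delta>) \<and> ln (2 * real B / \<delta>) \<le> ln (2 * (real B)\<^sup>2 / \<delta>)
    \<and> ln (2 * (real B)\<^sup>2 / \<delta>) \<ge> 1/2 \<and> trd d L \<ge> 0 \<and> trd d (mmd d L L) \<ge> 0
    \<and> sqrt (trd d L) \<le> R / C \<and> sqrt (trd d (mmd d L L)) \<le> R\<^sup>2 / (C\<^sup>2 * sqrt (real d))
    \<and> max (trd d L) (c0 * opnorm2 d L * ln (2 * real B / \<delta>)) \<le> c0 * R\<^sup>2 / C\<^sup>2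
    \<and> c0 * ln (2 * (real B)\<^sup>2 / \<delta>) / sqrt (real d) \<le> 1/50"
proof -
  define l1 where "l1 = ln (2 * real B / \<delta>)"
  define l2 where "l2 = ln (2 * (real B)\<^sup>2 / \<delta>)"
  define trL where "trL = trd d L"
  define trL2 where "trL2 = trd d (mmd d L L)"
  define nL where "nL = opnorm2 d L"
  have Cpos: "C > 0" using C c0 by (smt (verit) power2_less_0 zero_less_power)
  have b2: "2 * real B / \<delta> \<ge> 2"
  proof -
    have "2 * real B / \<delta> \<ge> 2 * 1 / 1" using B \<delta> by (intro frac_le) auto
    then show ?thesis by simp
  qed
  have l1pos: "l1 \<ge> ln 2" unfolding l1_def using b2 by simp
  have "2 * (real B)\<^sup>2 / \<delta> \<ge> 2 * real B / \<delta>" using B \<delta>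
    by (intro divide_right_mono) (auto simp: power2_eq_square)
  then have l12: "l1 \<le> l2" unfolding l1_def l2_def using b2 by simp
  have ln2: "ln (2::real) \<ge> 2/3" by (rule ln2_ge_two_thirds)
  have l1p: "l1 > 0" using l1pos ln2 by linarith
  have l2h: "l2 \<ge> 1/2" using l1pos l12 ln2 by linarith
  have "real d \<ge> C * l2 ^ 4" using A3 unfolding l2_def .
  moreover have "C * l2 ^ 4 > 0" using Cpos l2h by simp
  ultimately have dpos: "real d > 0" by linarith
  then have d1: "d \<ge> 1" by simp
  have Lii: "L i i > 0" if i: "i < d" for i
  proof -
    have "dotd d (\<lambda>k. if k = i then 1 else 0) (mvd d L (\<lambda>k. if k = i then 1 else 0)) > 0"
      using L i unfolding sym_pd_def by auto
    moreover have "dotd d (\<lambda>k. if k = i then 1 else 0) (mvd d L (\<lambda>k. if k = i then 1 else 0)) = L i i"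
      using i by (simp add: dotd_def mvd_def if_distrib[of "\<lambda>x. x * _"] if_distrib[of "\<lambda>x. _ * x"] cong: if_cong)
    ultimately show ?thesis by simp
  qed
  have trL0: "trL \<ge> 0" unfolding trL_def trd_def using Lii by (intro sum_nonneg) (auto intro: less_imp_le)
  have Lsym: "\<forall>i<d. \<forall>j<d. L i j = L j i" using L unfolding sym_pd_def by auto
  have trL2eq: "trL2 = (\<Sum>i<d. \<Sum>j<d. (L i j)\<^sup>2)"
    unfolding trL2_def trd_def mmd_def using Lsym by (intro sum.cong refl) (auto simp: power2_eq_square)
  have trL20: "trL2 \<ge> 0" unfolding trL2eq by (intro sum_nonneg) auto
  have diag: "(\<Sum>i<d. (L i i)\<^sup>2) \<le> trL2"
    unfolding trL2eq by (intro sum_mono member_le_sum) auto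
  have "trL\<^sup>2 \<le> (\<Sum>i<d. (L i i)\<^sup>2) * real d"
    unfolding trL_def trd_def using sum_squared_le_sum_of_squares[of "\<lambda>i. L i i" "{..<d}"] by simp
  also have "\<dots> \<le> real d * trL2" using diag dpos by (simp add: mult.commute)
  finally have "trL \<le> sqrt (real d * trL2)" using real_le_rsqrt by blast
  moreover have "C\<^sup>2 * sqrt (real d * trL2) \<le> R\<^sup>2" using A1 unfolding trL2_def by simp
  ultimately have "C\<^sup>2 * trL \<le> R\<^sup>2" using Cpos by (smt (verit) mult_left_mono zero_le_power2)
  then have trLb: "trL \<le> R\<^sup>2 / C\<^sup>2" using Cpos by (simp add: field_simps)
  have sqtrL: "sqrt trL \<le> R / C"
  proof -
    have "sqrt trL \<le> sqrt ((R / C)\<^sup>2)" using trLb by (simp add: power_divide)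
    then show ?thesis using R Cpos by simp
  qed
  have "sqrt (real d) * sqrt trL2 \<le> R\<^sup>2 / C\<^sup>2"
    using A1 Cpos unfolding trL2_def by (simp add: real_sqrt_mult field_simps)
  moreover have sp: "sqrt (real d) > 0" using dpos by simp
  ultimately have "sqrt trL2 * sqrt (real d) \<le> R\<^sup>2 / C\<^sup>2" by (simp add: mult.commute)
  then have "sqrt trL2 \<le> (R\<^sup>2 / C\<^sup>2) / sqrt (real d)"
    by (rule pos_le_divide_eq[OF sp, THEN iffD2])
  then have sqtrL2: "sqrt trL2 \<le> R\<^sup>2 / (C\<^sup>2 * sqrt (real d))"
    by (simp add: divide_divide_eq_left)
  have "C\<^sup>2 * nL * l1 \<le> C\<^sup>2 * max (max (trL / real d) (sqrt (trL2 / real N))) nL * l1"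
    using l1p Cpos by (intro mult_right_mono mult_left_mono) auto
  also have "\<dots> \<le> R\<^sup>2" using A1 unfolding trL_def trL2_def nL_def l1_def by simp
  finally have "nL * l1 \<le> R\<^sup>2 / C\<^sup>2" using Cpos by (simp add: field_simps)
  then have "c0 * (nL * l1) \<le> c0 * (R\<^sup>2 / C\<^sup>2)" using c0 by (intro mult_left_mono) auto
  then have nLb: "c0 * nL * l1 \<le> c0 * R\<^sup>2 / C\<^sup>2" by (simp add: mult.assoc)
  have "trL \<le> c0 * R\<^sup>2 / C\<^sup>2" using trLb c0 R Cpos
    by (smt (verit, ccfv_SIG) divide_right_mono mult_le_cancel_right1 zero_le_power2)
  with nLb have maxb: "max trL (c0 * nL * l1) \<le> c0 * R\<^sup>2 / C\<^sup>2" by simp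
  have "sqrt (real d) \<ge> sqrt (C * l2 ^ 4)" using A3 unfolding l2_def by simp
  moreover have "sqrt (C * l2 ^ 4) = sqrt C * l2\<^sup>2"
  proof -
    have "sqrt (l2 ^ 4) = l2\<^sup>2" using real_sqrt_abs[of "l2\<^sup>2"] by simp
    then show ?thesis by (simp add: real_sqrt_mult)
  qed
  ultimately have sd: "sqrt (real d) \<ge> sqrt C * l2\<^sup>2" by simp
  have sC: "sqrt C \<ge> 100 * c0"
  proof -
    have "(100 * c0)\<^sup>2 \<le> C" using C by (simp add: power_mult_distrib)
    then show ?thesis using real_le_rsqrt by blast
  qed
  have "c0 * l2 / sqrt (real d) \<le> c0 * l2 / (sqrt C * l2\<^sup>2)"
    using sd c0 l2h Cpos dpos by (intro divide_left_mono mult_pos_pos) auto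
  also have "\<dots> = c0 / (sqrt C * l2)" using l2h by (simp add: power2_eq_square)
  also have "\<dots> \<le> c0 / (100 * c0 * (1/2))"
    using sC l2h c0 Cpos by (intro divide_left_mono mult_mono mult_pos_pos) auto
  also have "\<dots> = 1/50" using c0 by simp
  finally have eb: "c0 * l2 / sqrt (real d) \<le> 1/50" .
  show ?thesis using d1 l1p l12 l2h trL0 trL20 sqtrL sqtrL2 maxb eb
    unfolding l1_def l2_def trL_def trL2_def nL_def by auto
qed


lemma scal_bounds:
  fixes c0 C R s l1 l2 tL tL2 M sN N :: real
  assumes c0: "c0 > 1" and C: "C \<ge> 10000 * c0\<^sup>2" and R: "R > 0" and s: "s > 0"
    and l1: "l1 > 0" "l1 \<le> l2" and tL: "tL \<ge> 0" "tL \<le> R / C" and tL2: "tL2 \<ge> 0" "tL2 \<le> R\<^sup>2 / (C\<^sup>2 * s)"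
    and M: "M \<le> c0 * R\<^sup>2 / C\<^sup>2" and e: "c0 * l2 / s \<le> 1/50" and N: "N \<ge> 1" and sN: "sN \<ge> 1"
  shows "R\<^sup>2 + c0 * R * tL * l1 / (sN * s) + 4 * M / N \<le> 21/20 * R\<^sup>2"
    and "R\<^sup>2 + 2 * c0 * R * tL * l1 / s + 4 * M \<le> 21/20 * R\<^sup>2"
    and "R\<^sup>2 - c0 * ((1 + 1 / sN) * R * tL / s + tL2 / sN) * l1 \<ge> R\<^sup>2 / 2"
    and "c0 * (R\<^sup>2 / s + R * tL / (sN * s) + tL2 / N) * l2 \<le> 11/10 * R\<^sup>2 * (c0 * l2 / s)"
    and "c0 * (R\<^sup>2 / s + R * tL / s + tL2) * l2 \<le> 11/10 * R\<^sup>2 * (c0 * l2 / s)"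
proof -
  have c0sq: "c0\<^sup>2 \<ge> c0" using c0 by (simp add: power2_eq_square)
  have Cp: "C \<ge> 10000 * c0" using C c0sq by linarith
  have Cpos: "C > 0" using Cp c0 by linarith
  have a: "c0 / C \<le> 1/10000" using Cp Cpos c0 by (simp add: field_simps)
  have b: "1 / C \<le> 1/10000" using Cp Cpos c0 by (simp add: field_simps)
  have e1: "c0 * l1 / s \<le> 1/50"
  proof -
    have "c0 * l1 / s \<le> c0 * l2 / s" using l1 c0 s by (intro divide_right_mono mult_left_mono) auto
    then show ?thesis using e by linarith
  qed
  have e1p: "c0 * l1 / s \<ge> 0" using c0 l1 s by simp
  have ep: "c0 * l2 / s \<ge> 0" using c0 l1 s by simp
  have R2: "R\<^sup>2 > 0" using R by simp
  have t1: "c0 * R * tL * l1 / s \<le> R\<^sup>2 * (c0 * l1 / s) * (1 / C)"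
  proof -
    have "c0 * R * tL * l1 / s = (c0 * R * l1 / s) * tL" by simp
    also have "\<dots> \<le> (c0 * R * l1 / s) * (R / C)" using tL c0 R l1 s by (intro mult_left_mono) auto
    also have "\<dots> = R\<^sup>2 * (c0 * l1 / s) * (1 / C)" by (simp add: power2_eq_square)
    finally show ?thesis .
  qed
  have t1b: "c0 * R * tL * l1 / s \<le> R\<^sup>2 / 500000"
  proof -
    have "R\<^sup>2 * (c0 * l1 / s) * (1 / C) \<le> R\<^sup>2 * (1/50) * (1/10000)"
      using R2 e1 e1p b Cpos by (intro mult_mono) auto
    then show ?thesis using t1 by linarith
  qed
  have Mb: "M \<le> R\<^sup>2 / 100000000"
  proof -
    have "c0 * R\<^sup>2 / C\<^sup>2 = R\<^sup>2 * (c0 / C) * (1 / C)" by (simp add: power2_eq_square)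
    also have "\<dots> \<le> R\<^sup>2 * (1/10000) * (1/10000)"
      using R2 a b Cpos c0 by (intro mult_mono) auto
    finally show ?thesis using M by linarith
  qed
  have t2: "c0 * R * tL / s \<le> R\<^sup>2 * (c0 / s) * (1 / C)"
  proof -
    have "c0 * R * tL / s = (c0 * R / s) * tL" by simp
    also have "\<dots> \<le> (c0 * R / s) * (R / C)" using tL c0 R s by (intro mult_left_mono) auto
    also have "\<dots> = R\<^sup>2 * (c0 / s) * (1 / C)" by (simp add: power2_eq_square)
    finally show ?thesis .
  qed
  have Rt: "R * tL \<le> R\<^sup>2 / C"
  proof -
    have "R * tL \<le> R * (R / C)" using tL R by (intro mult_left_mono) auto
    then show ?thesis by (simp add: power2_eq_square)
  qed
  show "R\<^sup>2 + c0 * R * tL * l1 / (sN * s) + 4 * M / N \<le> 21/20 * R\<^sup>2"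
  proof -
    have X: "c0 * R * tL * l1 / s \<ge> 0" using c0 R tL l1 s by simp
    have "c0 * R * tL * l1 / (sN * s) = (c0 * R * tL * l1 / s) / sN" using sN s by (simp add: field_simps)
    also have "\<dots> \<le> (c0 * R * tL * l1 / s) / 1" using X sN by (intro divide_left_mono) auto
    finally have "c0 * R * tL * l1 / (sN * s) \<le> c0 * R * tL * l1 / s" by simp
    moreover have "4 * M / N \<le> 4 * R\<^sup>2 / 100000000"
    proof (cases "M \<ge> 0")
      case True
      then have "4 * M / N \<le> 4 * M / 1" using N by (intro divide_left_mono) auto
      then show ?thesis using Mb by simp
    next
      case False
      then have "4 * M / N \<le> 0" using N by (simp add: divide_nonpos_pos)
      then show ?thesis using R2 by linarith
    qed
    ultimately show ?thesis using t1b R2 by linarith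
  qed
  show "R\<^sup>2 + 2 * c0 * R * tL * l1 / s + 4 * M \<le> 21/20 * R\<^sup>2"
    using t1b Mb R2 by linarith
  define Q where "Q = R\<^sup>2 / s"
  have Qp: "Q > 0" unfolding Q_def using R2 s by simp
  define K where "K = R\<^sup>2 / (C * s)"
  have QC: "K \<le> Q / 10000"
  proof -
    have "K = Q * (1 / C)" unfolding Q_def K_def by simp
    also have "\<dots> \<le> Q * (1/10000)" using Qp b by (intro mult_left_mono) auto
    finally show ?thesis by simp
  qed
  have QCp: "K \<ge> 0" unfolding K_def using R2 Cpos s by simp
  have hA: "R * tL / s \<le> K"
  proof -
    have "R * tL / s \<le> (R\<^sup>2 / C) / s" using Rt s by (intro divide_right_mono) auto
    then show ?thesis unfolding K_def by simp
  qed
  have hAp: "R * tL / s \<ge> 0" using R tL s by simp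
  have hB: "tL2 \<le> K / 10000"
  proof -
    have "R\<^sup>2 / (C\<^sup>2 * s) = K * (1 / C)" unfolding K_def by (simp add: power2_eq_square)
    also have "\<dots> \<le> K * (1/10000)" using QCp b by (intro mult_left_mono) auto
    finally show ?thesis using tL2 by linarith
  qed
  have sN1: "1 / sN \<le> 1" and sN0: "1 / sN \<ge> 0" using sN by auto
  have hB2: "tL2 / sN \<le> tL2"
  proof -
    have "tL2 / sN \<le> tL2 / 1" using tL2 sN by (intro divide_left_mono) auto
    then show ?thesis by simp
  qed
  have hB3: "tL2 / N \<le> tL2"
  proof -
    have "tL2 / N \<le> tL2 / 1" using tL2 N by (intro divide_left_mono) auto
    then show ?thesis by simp
  qed
  have hA2: "R * tL / (sN * s) \<le> R * tL / s"
  proof -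
    have "R * tL / (sN * s) = (R * tL / s) / sN" using sN s by (simp add: field_simps)
    also have "\<dots> \<le> (R * tL / s) / 1" using hAp sN by (intro divide_left_mono) auto
    finally show ?thesis by simp
  qed
  show "R\<^sup>2 - c0 * ((1 + 1 / sN) * R * tL / s + tL2 / sN) * l1 \<ge> R\<^sup>2 / 2"
  proof -
    have "(1 + 1 / sN) * R * tL / s = (1 + 1 / sN) * (R * tL / s)" by simp
    also have "\<dots> \<le> 2 * (R * tL / s)" using sN1 hAp by (intro mult_right_mono) auto
    finally have i1: "(1 + 1 / sN) * R * tL / s \<le> 2 * (K)" using hA by linarith
    have I: "(1 + 1 / sN) * R * tL / s + tL2 / sN \<le> 3 * (K)"
      using i1 hB2 hB QCp by linarith
    have "c0 * ((1 + 1 / sN) * R * tL / s + tL2 / sN) * l1 \<le> c0 * (3 * (K)) * l1"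
      using I c0 l1 by (intro mult_right_mono mult_left_mono) auto
    also have "\<dots> = 3 * R\<^sup>2 * (c0 * l1 / s) * (1 / C)" unfolding K_def by (simp add: field_simps)
    also have "\<dots> \<le> 3 * R\<^sup>2 * (1/50) * (1/10000)"
      using R2 e1 e1p b Cpos by (intro mult_mono) auto
    finally show ?thesis using R2 by linarith
  qed
  show "c0 * (R\<^sup>2 / s + R * tL / (sN * s) + tL2 / N) * l2 \<le> 11/10 * R\<^sup>2 * (c0 * l2 / s)"
  proof -
    have I: "R\<^sup>2 / s + R * tL / (sN * s) + tL2 / N \<le> 11/10 * Q"
      using hA hA2 hB hB3 QC QCp Qp Q_def by linarith
    have "c0 * (R\<^sup>2 / s + R * tL / (sN * s) + tL2 / N) * l2 \<le> c0 * (11/10 * Q) * l2"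
      using I c0 l1 by (intro mult_right_mono mult_left_mono) auto
    also have "\<dots> = 11/10 * R\<^sup>2 * (c0 * l2 / s)" unfolding Q_def by simp
    finally show ?thesis .
  qed
  show "c0 * (R\<^sup>2 / s + R * tL / s + tL2) * l2 \<le> 11/10 * R\<^sup>2 * (c0 * l2 / s)"
  proof -
    have I: "R\<^sup>2 / s + R * tL / s + tL2 \<le> 11/10 * Q"
      using hA hB QC QCp Qp Q_def by linarith
    have "c0 * (R\<^sup>2 / s + R * tL / s + tL2) * l2 \<le> c0 * (11/10 * Q) * l2"
      using I c0 l1 by (intro mult_right_mono mult_left_mono) auto
    also have "\<dots> = 11/10 * R\<^sup>2 * (c0 * l2 / s)" unfolding Q_def by simp
    finally show ?thesis .
  qed
qed

lemma final_arith:
  fixes R c0 l2 e cB d B F G D0 O0 trW Rt :: real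
  assumes R: "R > 0" and c0: "c0 > 1" and l2: "l2 \<ge> 1/2" and d: "d > 0" and B: "B \<ge> 1"
    and cB: "cB > 0" and Bd: "B \<ge> cB * d" and de: "d * e\<^sup>2 = (c0 * l2)\<^sup>2"
    and FG: "B\<^sup>2 \<le> F * G" and G: "G \<le> B * D0 + B\<^sup>2 * O0"
    and D0: "0 \<le> D0" "D0 \<le> (21/20 * R\<^sup>2)\<^sup>2" and O0: "0 \<le> O0" "O0 \<le> (11/10 * R\<^sup>2 * e)\<^sup>2"
    and F: "F \<ge> 0" and tr: "trW \<ge> R\<^sup>2 / 2 * F"
  shows "min cB 1 * Rt\<^sup>2 / (16 * c0\<^sup>2 * R\<^sup>2 * l2\<^sup>2) \<le> Rt\<^sup>2 / d * trW"
proof -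
  define X where "X = D0 + B * O0"
  define P where "P = (c0 * l2)\<^sup>2 * R\<^sup>2 * R\<^sup>2"
  define m where "m = min cB 1"
  have Bp: "B > 0" using B by simp
  have "B * B \<le> F * (B * X)"
  proof -
    have "B\<^sup>2 \<le> F * G" by fact
    also have "\<dots> \<le> F * (B * D0 + B\<^sup>2 * O0)" using G F by (intro mult_left_mono) auto
    also have "\<dots> = F * (B * X)" unfolding X_def by (simp add: power2_eq_square algebra_simps)
    finally show ?thesis by (simp add: power2_eq_square)
  qed
  then have BFX: "B \<le> F * X" using Bp by (simp add: algebra_simps mult_le_cancel_left_pos)
  have Xnn: "X \<ge> 0" unfolding X_def using D0 O0 Bp by simp
  have m1: "m \<le> 1" "m \<le> cB" "m > 0" unfolding m_def using cB by auto
  have md: "m * d \<le> B" using m1 d Bd by (smt (verit) mult_right_mono)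
  have c0l: "(c0 * l2)\<^sup>2 \<ge> 1/4"
  proof -
    have "c0 * l2 \<ge> 1 * (1/2)" using c0 l2 by (intro mult_mono) auto
    then have "(c0 * l2)\<^sup>2 \<ge> (1/2)\<^sup>2" by (intro power_mono) auto
    then show ?thesis by (simp add: power2_eq_square)
  qed
  have R4: "R\<^sup>2 * R\<^sup>2 > 0" using R by simp
  have t1: "m * d * D0 \<le> B * D0" using md D0 by (intro mult_right_mono) auto
  have t2: "m * d * (B * O0) \<le> d * B * O0"
  proof -
    have "m * (d * B * O0) \<le> 1 * (d * B * O0)" using m1 d Bp O0 by (intro mult_right_mono) auto
    then show ?thesis by (simp add: algebra_simps)
  qed
  have t3: "d * O0 \<le> (11/10)\<^sup>2 * P"
  proof -
    have "d * O0 \<le> d * (11/10 * R\<^sup>2 * e)\<^sup>2" using O0 d by (intro mult_left_mono) auto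
    also have "\<dots> = (11/10)\<^sup>2 * R\<^sup>2 * R\<^sup>2 * (d * e\<^sup>2)" by (simp add: power2_eq_square algebra_simps)
    also have "\<dots> = (11/10)\<^sup>2 * P" unfolding de P_def by (simp add: algebra_simps)
    finally show ?thesis .
  qed
  have t4: "D0 \<le> (21/20)\<^sup>2 * 4 * P"
  proof -
    have "D0 \<le> (21/20)\<^sup>2 * (R\<^sup>2 * R\<^sup>2) * 1" using D0 by (simp add: power2_eq_square algebra_simps)
    also have "\<dots> \<le> (21/20)\<^sup>2 * (R\<^sup>2 * R\<^sup>2) * (4 * (c0 * l2)\<^sup>2)" using c0l R4
      by (intro mult_left_mono) auto
    also have "\<dots> = (21/20)\<^sup>2 * 4 * P" unfolding P_def by (simp add: algebra_simps)
    finally show ?thesis .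
  qed
  have Pp: "P \<ge> 0" unfolding P_def by simp
  have "m * d * X \<le> B * D0 + d * B * O0" unfolding X_def using t1 t2 by (simp add: algebra_simps)
  also have "\<dots> = B * (D0 + d * O0)" by (simp add: algebra_simps)
  also have "\<dots> \<le> B * (8 * P)" using t3 t4 Bp Pp by (intro mult_left_mono) (auto simp: power2_eq_square)
  also have "\<dots> \<le> (8 * P) * (F * X)" using BFX Pp by (subst mult.commute) (intro mult_right_mono, auto)
  finally have "m * d * X \<le> (8 * P * F) * X" by (simp add: algebra_simps)
  moreover have "X > 0"
  proof (rule ccontr)
    assume "\<not> X > 0" then have "X = 0" using Xnn by simp
    then show False using BFX Bp by simp
  qed
  ultimately have key: "m * d \<le> 8 * P * F" by simp
  have "m * Rt\<^sup>2 / (16 * c0\<^sup>2 * R\<^sup>2 * l2\<^sup>2) = Rt\<^sup>2 * R\<^sup>2 / (2 * d) * (m * d / (8 * P))"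
    unfolding P_def using d R c0 l2 by (simp add: field_simps power2_eq_square)
  also have "\<dots> \<le> Rt\<^sup>2 * R\<^sup>2 / (2 * d) * F"
  proof -
    have "P > 0" unfolding P_def using c0 l2 R by simp
    then have "m * d / (8 * P) \<le> F" using key by (simp add: divide_le_eq mult.commute)
    then show ?thesis using d by (intro mult_left_mono) auto
  qed
  also have "\<dots> = Rt\<^sup>2 / d * (R\<^sup>2 / 2 * F)" by (simp add: field_simps)
  also have "\<dots> \<le> Rt\<^sup>2 / d * trW" using tr d by (intro mult_left_mono) auto
  finally show ?thesis unfolding m_def .
qed
lemma fip_AA:
  "fip d (\<lambda>i j. a i * (y1 * x j)) (\<lambda>i j. b i * (y2 * x' j)) = dotd d a b * dotd d x x' * (y1 * y2)"
proof -
  have "dotd d a b * dotd d x x' * (y1 * y2) = (\<Sum>i<d. \<Sum>j<d. (a i * b i) * (x j * x' j)) * (y1 * y2)"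
    unfolding dotd_def sum_product ..
  also have "\<dots> = (\<Sum>i<d. \<Sum>j<d. (a i * b i) * (x j * x' j) * (y1 * y2))"
    by (simp add: sum_distrib_right)
  also have "\<dots> = fip d (\<lambda>i j. a i * (y1 * x j)) (\<lambda>i j. b i * (y2 * x' j))"
    unfolding fip_def by (intro sum.cong refl) (simp add: mult_ac)
  finally show ?thesis ..
qed
lemma fip_sumr: "fip d W (\<lambda>i j. \<Sum>t<B. A t i j) = (\<Sum>t<B. fip d W (A t))"
proof -
  have "fip d W (\<lambda>i j. \<Sum>t<B. A t i j) = (\<Sum>i<d. \<Sum>j<d. \<Sum>t<B. W i j * A t i j)"
    unfolding fip_def by (simp add: sum_distrib_left)
  also have "\<dots> = (\<Sum>i<d. \<Sum>t<B. \<Sum>j<d. W i j * A t i j)"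
    by (intro sum.cong refl) (rule sum.swap)
  also have "\<dots> = (\<Sum>t<B. \<Sum>i<d. \<Sum>j<d. W i j * A t i j)"
    by (rule sum.swap)
  finally show ?thesis unfolding fip_def .
qed
lemma fip_comm: "fip d U V = fip d V U"
  unfolding fip_def by (simp add: mult.commute)
lemma fip_sum2: "fip d (\<lambda>i j. \<Sum>t<B. A t i j) (\<lambda>i j. \<Sum>t<B. A t i j) = (\<Sum>t<B. \<Sum>q<B. fip d (A t) (A q))"
proof -
  have "fip d (\<lambda>i j. \<Sum>t<B. A t i j) (\<lambda>i j. \<Sum>t<B. A t i j) = (\<Sum>t<B. fip d (\<lambda>i j. \<Sum>t<B. A t i j) (A t))"
    by (rule fip_sumr)
  also have "\<dots> = (\<Sum>t<B. fip d (A t) (\<lambda>i j. \<Sum>t<B. A t i j))"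
    by (intro sum.cong refl) (rule fip_comm)
  also have "\<dots> = (\<Sum>t<B. \<Sum>q<B. fip d (A t) (A q))"
    by (intro sum.cong refl) (rule fip_sumr)
  finally show ?thesis .
qed

lemma core:
  fixes c0 C cB R \<delta> Rt :: real and d B N :: nat and L mh xq :: "nat \<Rightarrow> nat \<Rightarrow> real" and yq :: "nat \<Rightarrow> real"
  assumes c0: "c0 > 1" and C: "C \<ge> 10000 * c0\<^sup>2" and cB: "cB > 0" and B: "B \<ge> 1" and N: "N \<ge> 1"
    and R: "R > 0" and \<delta>: "0 < \<delta>" "\<delta> < 1" and L: "sym_pd d L"
    and yq: "\<forall>\<tau><B. yq \<tau> \<in> {-1, 1}"
    and GR: "good_run c0 d B N R \<delta> L mh xq yq"
    and A1: "R\<^sup>2 \<ge> max (C\<^sup>2 * sqrt (real d * trd d (mmd d L L)))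
                 (C\<^sup>2 * max (max (trd d L / real d) (sqrt (trd d (mmd d L L) / real N))) (opnorm2 d L) * ln (2 * real B / \<delta>))"
    and A2: "real B \<ge> cB * real d"
    and A3: "real d \<ge> C * (ln (2 * (real B)\<^sup>2 / \<delta>)) ^ 4"
  shows "d \<ge> 1 \<and> (\<exists>!W. is_max_margin d B mh xq yq W)
      \<and> (\<forall>W. is_max_margin d B mh xq yq W \<longrightarrow>
           min cB 1 * Rt\<^sup>2 / (16 * c0\<^sup>2 * R\<^sup>2 * (ln (2 * (real B)\<^sup>2 / \<delta>))\<^sup>2) \<le> Rt\<^sup>2 / real d * trd d W
         \<and> Rt\<^sup>2 / real d * trd d W \<le> 6 * Rt\<^sup>2 / R\<^sup>2)"
proof -
  define l1 where "l1 = ln (2 * real B / \<delta>)"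
  define l2 where "l2 = ln (2 * (real B)\<^sup>2 / \<delta>)"
  define trL where "trL = trd d L"
  define trL2 where "trL2 = trd d (mmd d L L)"
  define nL where "nL = opnorm2 d L"
  define s where "s = sqrt (real d)"
  define sN where "sN = sqrt (real N)"
  define e where "e = c0 * l2 / s"
  note pre = prelim[OF c0 C B N R \<delta> L A1 A3]
  have d1: "d \<ge> 1" using pre by simp
  have l1p: "0 < l1" and l12: "l1 \<le> l2" and l2h: "l2 \<ge> 1/2" using pre unfolding l1_def l2_def by auto
  have trL0: "trL \<ge> 0" and trL20: "trL2 \<ge> 0" using pre unfolding trL_def trL2_def by auto
  have sqtrL: "sqrt trL \<le> R / C" and sqtrL2: "sqrt trL2 \<le> R\<^sup>2 / (C\<^sup>2 * s)"
    using pre unfolding trL_def trL2_def s_def by auto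
  have maxb: "max trL (c0 * nL * l1) \<le> c0 * R\<^sup>2 / C\<^sup>2" using pre unfolding trL_def nL_def l1_def by auto
  have eb: "c0 * l2 / s \<le> 1/50" using pre unfolding l2_def s_def by auto
  have sp: "s > 0" unfolding s_def using d1 by simp
  have sN1: "sN \<ge> 1" unfolding sN_def using N by simp
  have ep: "e \<ge> 0" unfolding e_def using c0 l2h sp by simp
  have NdEq: "sqrt (real N * real d) = sN * s" unfolding sN_def s_def by (simp add: real_sqrt_mult)
  note SB = scal_bounds[OF c0 C R sp l1p l12 real_sqrt_ge_zero[OF trL0] sqtrL real_sqrt_ge_zero[OF trL20] sqtrL2
      maxb eb _ sN1, of "real N"]
  have NN: "real N \<ge> 1" using N by simp
  have GR': "\<forall>\<tau><B.
        \<bar>sqnd d (mh \<tau>) - R\<^sup>2\<bar> \<le> c0 * R * sqrt trL * l1 / (sN * s) + 4 * max trL (c0 * nL * l1) / real N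
      \<and> \<bar>sqnd d (xq \<tau>) - R\<^sup>2\<bar> \<le> 2 * c0 * R * sqrt trL * l1 / s + 4 * max trL (c0 * nL * l1)
      \<and> \<bar>dotd d (mh \<tau>) (\<lambda>k. yq \<tau> * xq \<tau> k) - R\<^sup>2\<bar> \<le>
            c0 * ((1 + 1 / sN) * R * sqrt trL / s + sqrt trL2 / sN) * l1
      \<and> (\<forall>q<B. q \<noteq> \<tau> \<longrightarrow>
          \<bar>dotd d (mh q) (mh \<tau>)\<bar> \<le> c0 * (R\<^sup>2 / s + R * sqrt trL / (sN * s) + sqrt trL2 / real N) * l2
        \<and> \<bar>dotd d (xq \<tau>) (xq q)\<bar> \<le> c0 * (R\<^sup>2 / s + R * sqrt trL / s + sqrt trL2) * l2)"
    using GR unfolding good_run_def Let_def l1_def[symmetric] l2_def[symmetric] trL_def[symmetric]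
      trL2_def[symmetric] nL_def[symmetric] s_def[symmetric] sN_def[symmetric] NdEq .
  have SM: "sqnd d (mh \<tau>) \<le> 21/20 * R\<^sup>2" if "\<tau> < B" for \<tau>
    using GR'[rule_format, OF that] SB(1)[OF NN] by linarith
  have SX: "sqnd d (xq \<tau>) \<le> 21/20 * R\<^sup>2" if "\<tau> < B" for \<tau>
    using GR'[rule_format, OF that] SB(2)[OF NN] by linarith
  have DM: "dotd d (mh \<tau>) (\<lambda>k. yq \<tau> * xq \<tau> k) \<ge> R\<^sup>2 / 2" if "\<tau> < B" for \<tau>
    using GR'[rule_format, OF that] SB(3)[OF NN] by linarith
  have OMM: "\<bar>dotd d (mh q) (mh \<tau>)\<bar> \<le> 11/10 * R\<^sup>2 * e" if "\<tau> < B" "q < B" "q \<noteq> \<tau>" for \<tau> q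
    using GR'[rule_format, OF that(1)] that SB(4)[OF NN] unfolding e_def by (meson order_trans)
  have OXX: "\<bar>dotd d (xq \<tau>) (xq q)\<bar> \<le> 11/10 * R\<^sup>2 * e" if "\<tau> < B" "q < B" "q \<noteq> \<tau>" for \<tau> q
    using GR'[rule_format, OF that(1)] that SB(5)[OF NN] unfolding e_def by (meson order_trans)
  define U1 where "U1 = (\<lambda>i j. if i < d \<and> j = i then 2 / R\<^sup>2 else (0::real))"
  have U1d: "U1 \<in> dmat d" unfolding U1_def dmat_def by auto
  have U1mv: "dotd d a (mvd d U1 v) = 2 / R\<^sup>2 * dotd d a v" for a v
  proof -
    have "dotd d a (mvd d U1 v) = (\<Sum>i<d. a i * (2 / R\<^sup>2 * v i))"
      unfolding dotd_def mvd_def U1_def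
      by (intro sum.cong refl) (simp add: if_distrib[of "\<lambda>x. x * _"] cong: if_cong)
    also have "\<dots> = 2 / R\<^sup>2 * dotd d a v" unfolding dotd_def by (simp add: sum_distrib_left sum_divide_distrib mult_ac)
    finally show ?thesis .
  qed
  have U1f: "mm_feasible d B mh xq yq U1"
    unfolding mm_feasible_def
  proof (intro allI impI)
    fix \<tau> assume "\<tau> < B"
    then have "dotd d (mh \<tau>) (\<lambda>k. yq \<tau> * xq \<tau> k) \<ge> R\<^sup>2 / 2" by (rule DM)
    then have "2 / R\<^sup>2 * dotd d (mh \<tau>) (\<lambda>k. yq \<tau> * xq \<tau> k) \<ge> 2 / R\<^sup>2 * (R\<^sup>2 / 2)"
      using R by (intro mult_left_mono) auto
    then show "dotd d (mh \<tau>) (mvd d U1 (\<lambda>k. yq \<tau> * xq \<tau> k)) \<ge> 1" using R by (simp add: U1mv)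
  qed
  have EU: "\<exists>!W. is_max_margin d B mh xq yq W" by (rule mm_exists_unique[OF U1d U1f])
  have fU1: "fro2 d U1 = real d * (2 / R\<^sup>2)\<^sup>2"
  proof -
    have "fro2 d U1 = (\<Sum>i<d. (2 / R\<^sup>2)\<^sup>2)"
      unfolding fro2_def U1_def by (intro sum.cong refl) (simp add: if_distrib[of "\<lambda>x. x\<^sup>2"] cong: if_cong)
    then show ?thesis by simp
  qed
  have fipU1: "fip d W U1 = 2 / R\<^sup>2 * trd d W" for W
  proof -
    have "fip d W U1 = (\<Sum>i<d. W i i * (2 / R\<^sup>2))"
      unfolding fip_def U1_def by (intro sum.cong refl) (simp add: if_distrib[of "\<lambda>x. _ * x"] cong: if_cong)
    then show ?thesis unfolding trd_def by (simp add: sum_distrib_left sum_divide_distrib mult_ac)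
  qed
  have bounds: "min cB 1 * Rt\<^sup>2 / (16 * c0\<^sup>2 * R\<^sup>2 * l2\<^sup>2) \<le> Rt\<^sup>2 / real d * trd d W
         \<and> Rt\<^sup>2 / real d * trd d W \<le> 6 * Rt\<^sup>2 / R\<^sup>2" if W: "is_max_margin d B mh xq yq W" for W
  proof -
    have Wd: "W \<in> dmat d" and Wf: "mm_feasible d B mh xq yq W" and Wmin: "fro2 d W \<le> fro2 d U1"
      using W U1d U1f unfolding is_max_margin_def by auto
    have var: "fip d W U1 \<ge> fro2 d W" by (rule mm_variational[OF W U1d U1f])
    have trlow: "trd d W \<ge> R\<^sup>2 / 2 * fro2 d W"
    proof -
      have "2 / R\<^sup>2 * trd d W \<ge> fro2 d W" using var fipU1 by simp
      then have "R\<^sup>2 / 2 * (2 / R\<^sup>2 * trd d W) \<ge> R\<^sup>2 / 2 * fro2 d W" using R by (intro mult_left_mono) auto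
      then show ?thesis using R by simp
    qed
    have dp: "real d > 0" using d1 by simp
    have up: "Rt\<^sup>2 / real d * trd d W \<le> 6 * Rt\<^sup>2 / R\<^sup>2"
    proof -
      have "(trd d W)\<^sup>2 \<le> (\<Sum>i<d. (W i i)\<^sup>2) * real d"
        unfolding trd_def using sum_squared_le_sum_of_squares[of "\<lambda>i. W i i" "{..<d}"] by simp
      also have "(\<Sum>i<d. (W i i)\<^sup>2) \<le> fro2 d W"
        unfolding fro2_def by (intro sum_mono member_le_sum) auto
      then have "(\<Sum>i<d. (W i i)\<^sup>2) * real d \<le> fro2 d W * real d" using dp by (intro mult_right_mono) auto
      also have "\<dots> \<le> real d * (2 / R\<^sup>2)\<^sup>2 * real d" using Wmin fU1 dp by (intro mult_right_mono) auto
      also have "\<dots> = (real d * (2 / R\<^sup>2))\<^sup>2" by (simp add: power2_eq_square)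
      finally have "(trd d W)\<^sup>2 \<le> (real d * (2 / R\<^sup>2))\<^sup>2" .
      then have "trd d W \<le> real d * (2 / R\<^sup>2)"
        by (rule power2_le_imp_le) (use dp R in auto)
      then have "Rt\<^sup>2 / real d * trd d W \<le> Rt\<^sup>2 / real d * (real d * (2 / R\<^sup>2))"
        using dp by (intro mult_left_mono) auto
      also have "\<dots> = 2 * Rt\<^sup>2 / R\<^sup>2" using dp by simp
      also have "\<dots> \<le> 6 * Rt\<^sup>2 / R\<^sup>2" using R by (simp add: divide_right_mono)
      finally show ?thesis .
    qed
    define A where "A = (\<lambda>t i j. mh t i * (yq t * xq t j))"
    define AS where "AS = (\<lambda>i j. \<Sum>t<B. A t i j)"
    have fA: "fip d W (A t) \<ge> 1" if "t < B" for t
      using Wf that unfolding mm_feasible_def constr_fip A_def by auto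
    have "fip d W AS = (\<Sum>t<B. fip d W (A t))" unfolding AS_def by (rule fip_sumr)
    also have "\<dots> \<ge> (\<Sum>t<B. 1)" using fA by (intro sum_mono) auto
    finally have fAS: "fip d W AS \<ge> real B" by simp
    have BFG: "(real B)\<^sup>2 \<le> fro2 d W * fro2 d AS"
    proof -
      have "(real B)\<^sup>2 \<le> (fip d W AS)\<^sup>2" using fAS by (intro power_mono) auto
      also have "\<dots> \<le> fro2 d W * fro2 d AS" by (rule fip_CS)
      finally show ?thesis .
    qed
    define D0 where "D0 = (21/20 * R\<^sup>2)\<^sup>2"
    define O0 where "O0 = (11/10 * R\<^sup>2 * e)\<^sup>2"
    have entry: "fip d (A t) (A q) \<le> (if q = t then D0 else 0) + O0" if tq: "t < B" "q < B" for t q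
    proof -
      have fe: "fip d (A t) (A q) = dotd d (mh t) (mh q) * dotd d (xq t) (xq q) * (yq t * yq q)"
        unfolding A_def by (rule fip_AA)
      have y1: "yq t = -1 \<or> yq t = 1" "yq q = -1 \<or> yq q = 1" using yq tq by auto
      have ys: "yq t * yq t = 1" "\<bar>yq t * yq q\<bar> = 1" using y1 by (auto simp: abs_mult)
      show ?thesis
      proof (cases "q = t")
        case True
        have sm: "sqnd d (mh t) \<ge> 0" "sqnd d (xq t) \<ge> 0" unfolding sqnd_def dotd_def by (auto intro: sum_nonneg)
        have "fip d (A t) (A q) = sqnd d (mh t) * sqnd d (xq t)" using True fe ys by (simp add: sqnd_def)
        also have "\<dots> \<le> (21/20 * R\<^sup>2) * (21/20 * R\<^sup>2)" using SM[OF tq(1)] SX[OF tq(1)] sm by (intro mult_mono) auto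
        also have "\<dots> = D0" unfolding D0_def by (simp add: power2_eq_square)
        moreover have "O0 \<ge> 0" unfolding O0_def by simp
        ultimately show ?thesis using True by simp
      next
        case False
        have "fip d (A t) (A q) \<le> \<bar>dotd d (mh t) (mh q) * dotd d (xq t) (xq q) * (yq t * yq q)\<bar>" using fe by simp
        also have "\<dots> = \<bar>dotd d (mh q) (mh t)\<bar> * \<bar>dotd d (xq t) (xq q)\<bar>"
          using ys by (simp add: abs_mult dotd_def mult.commute)
        also have "\<dots> \<le> (11/10 * R\<^sup>2 * e) * (11/10 * R\<^sup>2 * e)"
          using OMM[OF tq(1) tq(2) False] OXX[OF tq(1) tq(2) False] ep by (intro mult_mono) auto
        also have "\<dots> = O0" unfolding O0_def by (simp add: power2_eq_square)
        finally show ?thesis using False by simp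
      qed
    qed
    have G: "fro2 d AS \<le> real B * D0 + (real B)\<^sup>2 * O0"
    proof -
      have "fro2 d AS = (\<Sum>t<B. \<Sum>q<B. fip d (A t) (A q))" unfolding fro2_fip AS_def by (rule fip_sum2)
      also have "\<dots> \<le> (\<Sum>t<B. \<Sum>q<B. (if q = t then D0 else 0) + O0)"
        using entry by (intro sum_mono) auto
      also have "\<dots> = real B * D0 + (real B)\<^sup>2 * O0"
        by (simp add: sum.distrib power2_eq_square algebra_simps)
      finally show ?thesis .
    qed
    have de: "real d * e\<^sup>2 = (c0 * l2)\<^sup>2"
      unfolding e_def s_def using dp by (simp add: power_divide)
    have low: "min cB 1 * Rt\<^sup>2 / (16 * c0\<^sup>2 * R\<^sup>2 * l2\<^sup>2) \<le> Rt\<^sup>2 / real d * trd d W"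
      by (rule final_arith[OF R c0 l2h dp _ cB A2 de BFG G])
        (use B trlow fro2_nonneg in \<open>auto simp: D0_def O0_def\<close>)
    show ?thesis using low up by simp
  qed
  show ?thesis using d1 EU bounds unfolding l2_def by auto
qed

theorem mainTheorem8:
  fixes c0 :: real
  assumes "c0 > 1"
  shows "\<exists>C0>1. \<forall>C\<ge>C0. \<forall>cB>0.
    \<forall>(d::nat) (B::nat) (N::nat) (R::real) (\<delta>::real) (Rt::real) (L::nat \<Rightarrow> nat \<Rightarrow> real)
      (mu::nat \<Rightarrow> nat \<Rightarrow> real) (y::nat \<Rightarrow> nat \<Rightarrow> real) (z::nat \<Rightarrow> nat \<Rightarrow> nat \<Rightarrow> real).
    let x = (\<lambda>\<tau> i k. y \<tau> i * mu \<tau> k + z \<tau> i k);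
        muhat = (\<lambda>\<tau> k. (\<Sum>i<N. y \<tau> i * x \<tau> i k) / real N);
        xq = (\<lambda>\<tau>. x \<tau> N);
        yq = (\<lambda>\<tau>. y \<tau> N);
        trL = trd d L; trL2 = trd d (mmd d L L); nL = opnorm2 d L
    in
    (B \<ge> 1 \<and> N \<ge> 1 \<and> R > 0 \<and> 0 < \<delta> \<and> \<delta> < 1 \<and> Rt > 0 \<and> sym_pd d L
     \<and> (\<forall>\<tau><B. sqnd d (mu \<tau>) = R\<^sup>2)
     \<and> (\<forall>\<tau><B. \<forall>i\<le>N. y \<tau> i \<in> {-1, 1})
     \<and> good_run c0 d B N R \<delta> L muhat xq yq
     \<and> R\<^sup>2 \<ge> max (C\<^sup>2 * sqrt (real d * trL2))
                 (C\<^sup>2 * max (max (trL / real d) (sqrt (trL2 / real N))) nL * ln (2 * real B / \<delta>))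
     \<and> real B \<ge> cB * real d
     \<and> real d \<ge> C * (ln (2 * (real B)\<^sup>2 / \<delta>)) ^ 4)
    \<longrightarrow> (\<exists>!W. is_max_margin d B muhat xq yq W)
      \<and> (\<forall>W. is_max_margin d B muhat xq yq W \<longrightarrow>
           min cB 1 * Rt\<^sup>2 / (16 * c0\<^sup>2 * R\<^sup>2 * (ln (2 * (real B)\<^sup>2 / \<delta>))\<^sup>2)
             \<le> integral\<^sup>L (unif_sphere d Rt) (\<lambda>m. dotd d m (mvd d W m))
         \<and> integral\<^sup>L (unif_sphere d Rt) (\<lambda>m. dotd d m (mvd d W m)) \<le> 6 * Rt\<^sup>2 / R\<^sup>2)"
  proof (rule exI[where x="10000 * c0\<^sup>2"], intro conjI allI impI)
  have "c0\<^sup>2 > 1" using assms by (simp add: one_less_power)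
  then show "1 < 10000 * c0\<^sup>2" by simp
next
  fix C cB :: real and d B N :: nat and R \<delta> Rt :: real and L mu y :: "nat \<Rightarrow> nat \<Rightarrow> real"
    and z :: "nat \<Rightarrow> nat \<Rightarrow> nat \<Rightarrow> real"
  assume C: "10000 * c0\<^sup>2 \<le> C" and cB: "0 < cB"
  note c0 = assms
  show "let x = (\<lambda>\<tau> i k. y \<tau> i * mu \<tau> k + z \<tau> i k);
        muhat = (\<lambda>\<tau> k. (\<Sum>i<N. y \<tau> i * x \<tau> i k) / real N);
        xq = (\<lambda>\<tau>. x \<tau> N);
        yq = (\<lambda>\<tau>. y \<tau> N);
        trL = trd d L; trL2 = trd d (mmd d L L); nL = opnorm2 d L
    in
    (B \<ge> 1 \<and> N \<ge> 1 \<and> R > 0 \<and> 0 < \<delta> \<and> \<delta> < 1 \<and> Rt > 0 \<and> sym_pd d L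
     \<and> (\<forall>\<tau><B. sqnd d (mu \<tau>) = R\<^sup>2)
     \<and> (\<forall>\<tau><B. \<forall>i\<le>N. y \<tau> i \<in> {-1, 1})
     \<and> good_run c0 d B N R \<delta> L muhat xq yq
     \<and> R\<^sup>2 \<ge> max (C\<^sup>2 * sqrt (real d * trL2))
                 (C\<^sup>2 * max (max (trL / real d) (sqrt (trL2 / real N))) nL * ln (2 * real B / \<delta>))
     \<and> real B \<ge> cB * real d
     \<and> real d \<ge> C * (ln (2 * (real B)\<^sup>2 / \<delta>)) ^ 4)
    \<longrightarrow> (\<exists>!W. is_max_margin d B muhat xq yq W)
      \<and> (\<forall>W. is_max_margin d B muhat xq yq W \<longrightarrow>
           min cB 1 * Rt\<^sup>2 / (16 * c0\<^sup>2 * R\<^sup>2 * (ln (2 * (real B)\<^sup>2 / \<delta>))\<^sup>2)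
             \<le> integral\<^sup>L (unif_sphere d Rt) (\<lambda>m. dotd d m (mvd d W m))
         \<and> integral\<^sup>L (unif_sphere d Rt) (\<lambda>m. dotd d m (mvd d W m)) \<le> 6 * Rt\<^sup>2 / R\<^sup>2)"
    unfolding Let_def
    apply (intro impI)
    apply (elim conjE)
    subgoal premises prems
    proof -
      have yq: "\<forall>\<tau><B. y \<tau> N \<in> {-1, 1}" using prems(9) by auto
      note co = core[OF c0 C cB prems(1) prems(2) prems(3) prems(4) prems(5) prems(7) yq prems(10) prems(11) prems(12) prems(13), of Rt]
      have d1: "d \<ge> 1" using co by simp
      show ?thesis using co by (simp add: expect_quad[OF d1])
    qed
    done
qed

end
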